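(* Let $f\in\mathbb{C}\{x,y,z\}$ have decomposition into homogeneous parts $f=f_m+f_{m+k}+\cdots$ with $f_m\neq0$ and $k\geq1$, let $V=\{f=0\}\subset\mathbb{C}^3$, $\mathbf{C}=V(f_m)\subset\mathbb{P}^2$, and assume $\operatorname{Sing}(\mathbf{C})\cap V(f_{m+k})=\emptyset$ in $\mathbb{P}^2$. Let $\pi_0$ be the blow-up of $\mathbb{C}^3$ at the origin, $E_0\cong\mathbb{P}^2$ its exceptional divisor and $\widehat V$ the strict transform of $V$, so that $\widehat V\cap E_0$ is identified with $\mathbf{C}$. Let $P\in\mathbf{C}$. Then $\widehat V$ and $E_0$ intersect transversely at $P$ if and only if $P$ is a smooth point of $\mathbf{C}$. Otherwise, i.e. if $P\in\operatorname{Sing}(\mathbf{C})$, there exist local analytic coordinates $(x,y,z)$ around $P$ such that $E_0=\{z=0\}$ and $\widehat V=\{z^k+h(x,y)=0\}$, where $h(x,y)=0$ is a local equation of $\mathbf{C}$ at $P$ and $h$ has order at least $2$. *)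

theory Defs
  imports "HOL-Analysis.Analysis"
begin

type_synonym c3 = "complex \<times> complex \<times> complex"
type_synonym c2 = "complex \<times> complex"

definition deg :: "nat \<times> nat \<times> nat \<Rightarrow> nat" where
  "deg \<alpha> = (case \<alpha> of (i, j, l) \<Rightarrow> i + j + l)"

definition monom3 :: "nat \<times> nat \<times> nat \<Rightarrow> c3 \<Rightarrow> complex" where
  "monom3 \<alpha> p = (case \<alpha> of (i, j, l) \<Rightarrow> (case p of (x, y, z) \<Rightarrow> x ^ i * y ^ j * z ^ l))"

text \<open>A germ f in C{x,y,z} is given by its coefficient family c, converging absolutely on a ball.\<close>
definition converges_on_ball :: "(nat \<times> nat \<times> nat \<Rightarrow> complex) \<Rightarrow> real \<Rightarrow> bool" where
  "converges_on_ball c r \<longleftrightarrow> r > 0 \<and>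
     (\<forall>p \<in> ball 0 r. (\<lambda>\<alpha>. norm (c \<alpha> * monom3 \<alpha> p)) summable_on UNIV)"

definition hpart :: "(nat \<times> nat \<times> nat \<Rightarrow> complex) \<Rightarrow> nat \<Rightarrow> c3 \<Rightarrow> complex" where
  "hpart c d p = (\<Sum>\<alpha> \<in> {\<alpha>. deg \<alpha> = d}. c \<alpha> * monom3 \<alpha> p)"

text \<open>Singular points of the projective curve C = V(f_m), in homogeneous coordinates:
  nonzero w with f_m(w) = 0 and vanishing gradient of f_m at w.\<close>
definition sing_pt :: "(nat \<times> nat \<times> nat \<Rightarrow> complex) \<Rightarrow> nat \<Rightarrow> c3 \<Rightarrow> bool" where
  "sing_pt c m w \<longleftrightarrow> w \<noteq> 0 \<and> hpart c m w = 0 \<and>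
     (hpart c m has_derivative (\<lambda>_. 0)) (at w)"

text \<open>Standard affine charts of the blow-up of C^3 at 0 (j = 0,1,2):
  chart j (u,v,t) = t * dehom j (u,v); exceptional divisor E_0 = {t = 0},
  and (u,v,0) corresponds to the point [dehom j (u,v)] of E_0 = P^2.\<close>
definition dehom :: "nat \<Rightarrow> c2 \<Rightarrow> c3" where
  "dehom j uv = (case uv of (u, v) \<Rightarrow>
     (if j = 0 then (1, u, v) else if j = 1 then (u, 1, v) else (u, v, 1)))"

definition coordc :: "nat \<Rightarrow> c3 \<Rightarrow> complex" where
  "coordc j w = (case w of (a, b, d) \<Rightarrow> (if j = 0 then a else if j = 1 then b else d))"

text \<open>Affine coordinates of the projective point [w] in chart j (requires coordc j w \<noteq> 0).\<close>
definition aff :: "nat \<Rightarrow> c3 \<Rightarrow> c2" where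
  "aff j w = (case w of (a, b, d) \<Rightarrow>
     (if j = 0 then (b / a, d / a) else if j = 1 then (a / b, d / b) else (a / d, b / d)))"

text \<open>Local equation of the strict transform of V = {f = 0} in chart j:
  f(t * dehom j (u,v)) = t^m * strict c m j (u,v,t).\<close>
definition strict :: "(nat \<times> nat \<times> nat \<Rightarrow> complex) \<Rightarrow> nat \<Rightarrow> nat \<Rightarrow> c3 \<Rightarrow> complex" where
  "strict c m j q = (case q of (u, v, t) \<Rightarrow>
     infsum (\<lambda>\<alpha>. c \<alpha> * monom3 \<alpha> (dehom j (u, v)) * t ^ (deg \<alpha> - m)) UNIV)"

definition holo3 :: "c3 set \<Rightarrow> (c3 \<Rightarrow> complex) \<Rightarrow> bool" where
  "holo3 U f \<longleftrightarrow> open U \<and> (\<forall>p \<in> U. \<exists>a b d.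
     (f has_derivative (\<lambda>(x, y, z). a * x + b * y + d * z)) (at p))"

definition holo2 :: "c2 set \<Rightarrow> (c2 \<Rightarrow> complex) \<Rightarrow> bool" where
  "holo2 U f \<longleftrightarrow> open U \<and> (\<forall>p \<in> U. \<exists>a b.
     (f has_derivative (\<lambda>(x, y). a * x + b * y)) (at p))"

definition holo_map3 :: "c3 set \<Rightarrow> (c3 \<Rightarrow> c3) \<Rightarrow> bool" where
  "holo_map3 U \<Phi> \<longleftrightarrow> holo3 U (\<lambda>q. fst (\<Phi> q)) \<and> holo3 U (\<lambda>q. fst (snd (\<Phi> q)))
     \<and> holo3 U (\<lambda>q. snd (snd (\<Phi> q)))"

definition biholo3 :: "c3 set \<Rightarrow> c3 set \<Rightarrow> (c3 \<Rightarrow> c3) \<Rightarrow> bool" where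
  "biholo3 U W \<Phi> \<longleftrightarrow> open U \<and> open W \<and> holo_map3 U \<Phi> \<and> bij_betw \<Phi> U W \<and>
     (\<exists>\<Psi>. holo_map3 W \<Psi> \<and> (\<forall>q \<in> U. \<Psi> (\<Phi> q) = q))"

text \<open>The hypersurface {g = 0} meets E_0 = {t = 0} transversely at q:
  g is differentiable at q with differential not proportional to dt (so g is a local
  equation of a smooth surface whose tangent plane differs from that of E_0).\<close>
definition transversal_E0 :: "(c3 \<Rightarrow> complex) \<Rightarrow> c3 \<Rightarrow> bool" where
  "transversal_E0 g q \<longleftrightarrow> g q = 0 \<and> (\<exists>a b d.
     (g has_derivative (\<lambda>(x, y, z). a * x + b * y + d * z)) (at q) \<and> (a \<noteq> 0 \<or> b \<noteq> 0))"

end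

theory Submission
  imports Defs
begin

type_synonym idx = "nat \<times> nat \<times> nat"

definition trm :: "(idx \<Rightarrow> complex) \<Rightarrow> (idx \<Rightarrow> nat) \<Rightarrow> (idx \<Rightarrow> nat) \<Rightarrow> (idx \<Rightarrow> nat) \<Rightarrow> idx \<Rightarrow> c3 \<Rightarrow> complex" where
  "trm a P Q S \<alpha> q = a \<alpha> * fst q ^ P \<alpha> * fst (snd q) ^ Q \<alpha> * snd (snd q) ^ S \<alpha>"

definition ser where "ser a P Q S q = (\<Sum>\<^sub>\<infinity>\<alpha>. trm a P Q S \<alpha> q)"

definition msum where
  "msum a P Q S R1 R2 R3 \<longleftrightarrow> (\<lambda>\<alpha>. norm (a \<alpha>) * R1 ^ P \<alpha> * R2 ^ Q \<alpha> * R3 ^ S \<alpha>) summable_on UNIV"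

definition pd :: "real \<Rightarrow> real \<Rightarrow> real \<Rightarrow> c3 set" where
  "pd R1 R2 R3 = {q. norm (fst q) < R1 \<and> norm (fst (snd q)) < R2 \<and> norm (snd (snd q)) < R3}"

definition mulc :: "(idx \<Rightarrow> complex) \<Rightarrow> (idx \<Rightarrow> nat) \<Rightarrow> idx \<Rightarrow> complex" where
  "mulc a P = (\<lambda>\<alpha>. a \<alpha> * of_nat (P \<alpha>))"
definition dec :: "(idx \<Rightarrow> nat) \<Rightarrow> idx \<Rightarrow> nat" where "dec P = (\<lambda>\<alpha>. P \<alpha> - 1)"

lemma trm_norm_le:
  assumes "norm (fst q) \<le> r1" "norm (fst (snd q)) \<le> r2" "norm (snd (snd q)) \<le> r3"
  shows "norm (trm a P Q S \<alpha> q) \<le> norm (a \<alpha>) * r1 ^ P \<alpha> * r2 ^ Q \<alpha> * r3 ^ S \<alpha>"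
proof -
  have "0 \<le> r1" "0 \<le> r2" "0 \<le> r3"
    using order_trans[OF norm_ge_zero assms(1)] order_trans[OF norm_ge_zero assms(2)]
      order_trans[OF norm_ge_zero assms(3)] by auto
  then show ?thesis unfolding trm_def norm_mult norm_power
    by (intro mult_mono power_mono) (use assms in \<open>auto intro!: mult_nonneg_nonneg zero_le_power\<close>)
qed

lemma open_pd: "open (pd R1 R2 R3)"
  unfolding pd_def
  by (intro open_Collect_conj open_Collect_less) (auto intro!: continuous_intros)

lemma convex_pd: "convex (pd R1 R2 R3)"
proof -
  have c: "convex {q::c3. norm (f q) < R}" if "linear f" for f :: "c3 \<Rightarrow> complex" and R
  proof -
    have "{q::c3. norm (f q) < R} = f -` ball 0 R" by (auto simp: dist_norm)
    then show ?thesis using convex_linear_vimage[OF that convex_ball] by simp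
  qed
  have "pd R1 R2 R3 = {q. norm (fst q) < R1} \<inter> {q. norm (fst (snd q)) < R2} \<inter> {q. norm (snd (snd q)) < R3}"
    by (auto simp: pd_def)
  moreover have "linear (fst :: c3 \<Rightarrow> complex)" "linear (\<lambda>q::c3. fst (snd q))" "linear (\<lambda>q::c3. snd (snd q))"
    using linear_fst linear_compose[OF linear_snd linear_fst] linear_compose[OF linear_snd linear_snd]
    by (auto simp: o_def)
  ultimately show ?thesis by (metis c convex_Int)
qed

lemma npow_bound:
  fixes r R :: real
  assumes "0 < r" "r < R"
  shows "\<exists>C. \<forall>p. of_nat p * r ^ (p - 1) \<le> C * R ^ p"
proof -
  have "norm (r / R) < 1" using assms by auto
  then have "(\<lambda>n. of_nat n * (r/R) ^ n) \<longlonglongrightarrow> 0" by (rule powser_times_n_limit_0)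
  then have "Bseq (\<lambda>n. of_nat n * (r/R) ^ n)" by (rule convergent_imp_Bseq[OF convergentI])
  then obtain K where K: "K > 0" "\<And>n. norm (of_nat n * (r/R) ^ n) \<le> K" by (auto elim: BseqE)
  show ?thesis
  proof (intro exI allI)
    fix p :: nat
    show "of_nat p * r ^ (p - 1) \<le> (K / r) * R ^ p"
    proof (cases p)
      case 0 then show ?thesis using K assms by auto
    next
      case (Suc n)
      have "of_nat p * (r/R) ^ p \<le> K" using K(2)[of p] assms by auto
      then have "of_nat p * r ^ p \<le> K * R ^ p" using assms by (simp add: power_divide divide_le_eq)
      moreover have "r ^ p = r * r ^ (p - 1)" using Suc by simp
      ultimately have "r * (of_nat p * r ^ (p - 1)) \<le> K * R ^ p" by (simp add: algebra_simps)
      then show ?thesis using assms by (simp add: field_simps)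
    qed
  qed
qed

lemma msum_aux:
  fixes a :: "idx \<Rightarrow> complex" and W W' :: "idx \<Rightarrow> real"
  assumes sm: "(\<lambda>\<alpha>. norm (a \<alpha>) * R ^ (P \<alpha>) * W \<alpha>) summable_on UNIV"
    and W: "\<And>\<alpha>. 0 \<le> W' \<alpha>" "\<And>\<alpha>. W' \<alpha> \<le> W \<alpha>" and r: "0 < r" "r < R"
  shows "(\<lambda>\<alpha>. norm (a \<alpha> * of_nat (P \<alpha>)) * r ^ (P \<alpha> - 1) * W' \<alpha>) summable_on UNIV"
proof -
  obtain C where C: "\<And>p. of_nat p * r ^ (p - 1) \<le> C * R ^ p" using npow_bound[OF r] by blast
  show ?thesis
  proof (rule summable_on_comparison_test)
    show "(\<lambda>\<alpha>. C * (norm (a \<alpha>) * R ^ (P \<alpha>) * W \<alpha>)) summable_on UNIV"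
      by (rule summable_on_cmult_right[OF sm])
    fix \<alpha> :: idx
    have n: "norm (a \<alpha> * of_nat (P \<alpha>)) = norm (a \<alpha>) * of_nat (P \<alpha>)" by (simp add: norm_mult)
    show "0 \<le> norm (a \<alpha> * of_nat (P \<alpha>)) * r ^ (P \<alpha> - 1) * W' \<alpha>"
      using W r by simp
    have "norm (a \<alpha>) * (of_nat (P \<alpha>) * r ^ (P \<alpha> - 1)) * W' \<alpha> \<le> norm (a \<alpha>) * (C * R ^ P \<alpha>) * W \<alpha>"
      apply (rule mult_mono)
         apply (rule mult_left_mono[OF C])
      using W r by (auto intro!: mult_nonneg_nonneg order_trans[OF _ C])
    then show "norm (a \<alpha> * of_nat (P \<alpha>)) * r ^ (P \<alpha> - 1) * W' \<alpha> \<le> C * (norm (a \<alpha>) * R ^ P \<alpha> * W \<alpha>)"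
      unfolding n by (simp add: mult_ac)
  qed
qed

lemma msum_dP:
  assumes "msum a P Q S R1 R2 R3" "0 < r1" "r1 < R1" "0 \<le> r2" "r2 \<le> R2" "0 \<le> r3" "r3 \<le> R3"
  shows "msum (mulc a P) (dec P) Q S r1 r2 r3"
proof -
  have "(\<lambda>\<alpha>. norm (a \<alpha> * of_nat (P \<alpha>)) * r1 ^ (P \<alpha> - 1) * (r2 ^ Q \<alpha> * r3 ^ S \<alpha>)) summable_on UNIV"
    by (rule msum_aux[where W="\<lambda>\<alpha>. R2 ^ Q \<alpha> * R3 ^ S \<alpha>"])
       (use assms in \<open>auto simp: msum_def mult_ac intro!: mult_mono power_mono\<close>)
  then show ?thesis unfolding msum_def mulc_def dec_def by (simp add: mult_ac)
qed

lemma msum_dQ: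
  assumes "msum a P Q S R1 R2 R3" "0 < r2" "r2 < R2" "0 \<le> r1" "r1 \<le> R1" "0 \<le> r3" "r3 \<le> R3"
  shows "msum (mulc a Q) P (dec Q) S r1 r2 r3"
proof -
  have "(\<lambda>\<alpha>. norm (a \<alpha> * of_nat (Q \<alpha>)) * r2 ^ (Q \<alpha> - 1) * (r1 ^ P \<alpha> * r3 ^ S \<alpha>)) summable_on UNIV"
    by (rule msum_aux[where W="\<lambda>\<alpha>. R1 ^ P \<alpha> * R3 ^ S \<alpha>"])
       (use assms in \<open>auto simp: msum_def mult_ac intro!: mult_mono power_mono\<close>)
  then show ?thesis unfolding msum_def mulc_def dec_def by (simp add: mult_ac)
qed

lemma msum_dS:
  assumes "msum a P Q S R1 R2 R3" "0 < r3" "r3 < R3" "0 \<le> r1" "r1 \<le> R1" "0 \<le> r2" "r2 \<le> R2"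
  shows "msum (mulc a S) P Q (dec S) r1 r2 r3"
proof -
  have "(\<lambda>\<alpha>. norm (a \<alpha> * of_nat (S \<alpha>)) * r3 ^ (S \<alpha> - 1) * (r1 ^ P \<alpha> * r2 ^ Q \<alpha>)) summable_on UNIV"
    by (rule msum_aux[where W="\<lambda>\<alpha>. R1 ^ P \<alpha> * R2 ^ Q \<alpha>"])
       (use assms in \<open>auto simp: msum_def mult_ac intro!: mult_mono power_mono\<close>)
  then show ?thesis unfolding msum_def mulc_def dec_def by (simp add: mult_ac)
qed


lemma msum_mono:
  assumes "msum a P Q S R1 R2 R3" "0 \<le> r1" "r1 \<le> R1" "0 \<le> r2" "r2 \<le> R2" "0 \<le> r3" "r3 \<le> R3"
  shows "msum a P Q S r1 r2 r3"
  unfolding msum_def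
proof (rule summable_on_comparison_test)
  show "(\<lambda>\<alpha>. norm (a \<alpha>) * R1 ^ P \<alpha> * R2 ^ Q \<alpha> * R3 ^ S \<alpha>) summable_on UNIV"
    using assms(1) by (simp add: msum_def)
qed (use assms in \<open>auto intro!: mult_mono power_mono\<close>)

lemma msum_summable:
  assumes "msum a P Q S R1 R2 R3" "norm (fst q) \<le> R1" "norm (fst (snd q)) \<le> R2" "norm (snd (snd q)) \<le> R3"
  shows "(\<lambda>\<alpha>. trm a P Q S \<alpha> q) summable_on UNIV"
proof (rule abs_summable_summable)
  show "(\<lambda>\<alpha>. norm (trm a P Q S \<alpha> q)) summable_on UNIV"
    by (rule summable_on_comparison_test[where f="\<lambda>\<alpha>. norm (a \<alpha>) * R1 ^ P \<alpha> * R2 ^ Q \<alpha> * R3 ^ S \<alpha>"])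
       (use assms in \<open>auto simp: msum_def intro!: trm_norm_le\<close>)
qed

definition Bx :: "nat \<Rightarrow> idx set" where "Bx n = {..<n} \<times> {..<n} \<times> {..<n}"

lemma filterlim_Bx: "filterlim Bx (finite_subsets_at_top UNIV) sequentially"
  unfolding filterlim_finite_subsets_at_top
proof (intro allI impI)
  fix X :: "idx set" assume "finite X \<and> X \<subseteq> UNIV"
  then have f: "finite X" by simp
  obtain k1 where k1: "fst ` X \<subseteq> {..<k1}" using finite_nat_bounded[OF finite_imageI[OF f, of fst]] by blast
  obtain k2 where k2: "fst ` snd ` X \<subseteq> {..<k2}" using finite_nat_bounded[OF finite_imageI[OF finite_imageI[OF f, of snd], of fst]] by blast
  obtain k3 where k3: "snd ` snd ` X \<subseteq> {..<k3}" using finite_nat_bounded[OF finite_imageI[OF finite_imageI[OF f, of snd], of snd]] by blast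
  show "\<forall>\<^sub>F y in sequentially. finite (Bx y) \<and> X \<subseteq> Bx y \<and> Bx y \<subseteq> UNIV"
    unfolding eventually_sequentially
  proof (intro exI[of _ "k1 + k2 + k3"] allI impI conjI)
    fix n assume n: "k1 + k2 + k3 \<le> n"
    show "finite (Bx n)" by (simp add: Bx_def)
    show "X \<subseteq> Bx n"
    proof
      fix x assume x: "x \<in> X"
      have "fst x \<in> {..<k1}" using k1 x by blast
      moreover have "fst (snd x) \<in> {..<k2}" using k2 x by blast
      moreover have "snd (snd x) \<in> {..<k3}" using k3 x by blast
      ultimately show "x \<in> Bx n" using n unfolding Bx_def mem_Times_iff by simp
    qed
    show "Bx n \<subseteq> UNIV" by simp
  qed
qed

lemma trm_deriv:
  "(trm a P Q S \<alpha> has_derivative (\<lambda>h. trm (mulc a P) (dec P) Q S \<alpha> q * fst h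
      + trm (mulc a Q) P (dec Q) S \<alpha> q * fst (snd h) + trm (mulc a S) P Q (dec S) \<alpha> q * snd (snd h))) (at q)"
proof -
  have e: "trm a P Q S \<alpha> = (\<lambda>q. a \<alpha> * fst q ^ P \<alpha> * fst (snd q) ^ Q \<alpha> * snd (snd q) ^ S \<alpha>)"
    by (simp add: trm_def fun_eq_iff)
  have d1: "((\<lambda>x::c3. fst x) has_derivative (\<lambda>h. fst h)) (at q)"
    by (rule bounded_linear_imp_has_derivative[OF bounded_linear_fst])
  have d2: "((\<lambda>x::c3. fst (snd x)) has_derivative (\<lambda>h. fst (snd h))) (at q)"
    by (rule bounded_linear_imp_has_derivative[OF bounded_linear_compose[OF bounded_linear_fst bounded_linear_snd]])
  have d3: "((\<lambda>x::c3. snd (snd x)) has_derivative (\<lambda>h. snd (snd h))) (at q)"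
    by (rule bounded_linear_imp_has_derivative[OF bounded_linear_compose[OF bounded_linear_snd bounded_linear_snd]])
  show ?thesis unfolding e
    apply (rule has_derivative_eq_rhs)
     apply (rule has_derivative_mult has_derivative_const has_derivative_power d1 d2 d3)+
    by (auto simp: trm_def mulc_def dec_def fun_eq_iff algebra_simps)
qed

lemma ser_unif:
  assumes "msum b P Q S r1 r2 r3"
  shows "uniform_limit (pd r1 r2 r3) (\<lambda>n q. \<Sum>\<alpha>\<in>Bx n. trm b P Q S \<alpha> q) (ser b P Q S) sequentially"
proof -
  have "uniform_limit (pd r1 r2 r3) (\<lambda>X q. \<Sum>\<alpha>\<in>X. trm b P Q S \<alpha> q) (\<lambda>q. \<Sum>\<^sub>\<infinity>\<alpha>\<in>UNIV. trm b P Q S \<alpha> q) (finite_subsets_at_top UNIV)"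
    by (rule Weierstrass_m_test_general[where M="\<lambda>\<alpha>. norm (b \<alpha>) * r1 ^ P \<alpha> * r2 ^ Q \<alpha> * r3 ^ S \<alpha>"])
       (use assms in \<open>auto simp: msum_def pd_def intro!: trm_norm_le\<close>)
  from filterlim_compose[OF this filterlim_Bx] show ?thesis by (simp add: ser_def[abs_def])
qed

definition Dser where
  "Dser a P Q S q = (\<lambda>h. ser (mulc a P) (dec P) Q S q * fst h + ser (mulc a Q) P (dec Q) S q * fst (snd h)
      + ser (mulc a S) P Q (dec S) q * snd (snd h))"

lemma norm_h_le: "norm (fst h) \<le> norm h" "norm (fst (snd h)) \<le> norm h" "norm (snd (snd h)) \<le> norm (h::c3)"
proof -
  obtain x y z where h: "h = (x, y, z)" by (cases h) auto
  have "norm x \<le> norm (x, y, z)" by (rule norm_fst_le)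
  moreover have "norm y \<le> norm (y, z)" by (rule norm_fst_le)
  moreover have "norm z \<le> norm (y, z)" by (rule norm_snd_le)
  moreover have "norm (y, z) \<le> norm (x, y, z)" by (rule norm_snd_le)
  ultimately show "norm (fst h) \<le> norm h" "norm (fst (snd h)) \<le> norm h" "norm (snd (snd h)) \<le> norm h"
    using h by auto
qed

lemma ser_deriv:
  assumes m: "msum a P Q S R1 R2 R3" and q: "q \<in> pd R1 R2 R3"
  shows "(ser a P Q S has_derivative Dser a P Q S q) (at q)"
proof -
  define r1 where "r1 = (norm (fst q) + R1) / 2"
  define r2 where "r2 = (norm (fst (snd q)) + R2) / 2"
  define r3 where "r3 = (norm (snd (snd q)) + R3) / 2"
  have Rq1: "norm (fst q) < R1" using q by (simp add: pd_def)
  then have q1a: "norm (fst q) < r1" unfolding r1_def by auto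
  have q1b: "r1 < R1" unfolding r1_def using Rq1 by auto
  have q1c: "0 < r1" unfolding r1_def using add_nonneg_pos[OF norm_ge_zero[of "fst q"] le_less_trans[OF norm_ge_zero Rq1]] by simp
  note q1 = q1a q1b q1c
  have Rq2: "norm (fst (snd q)) < R2" using q by (simp add: pd_def)
  then have q2a: "norm (fst (snd q)) < r2" unfolding r2_def by auto
  have q2b: "r2 < R2" unfolding r2_def using Rq2 by auto
  have q2c: "0 < r2" unfolding r2_def using add_nonneg_pos[OF norm_ge_zero[of "fst (snd q)"] le_less_trans[OF norm_ge_zero Rq2]] by simp
  note q2 = q2a q2b q2c
  have Rq3: "norm (snd (snd q)) < R3" using q by (simp add: pd_def)
  then have q3a: "norm (snd (snd q)) < r3" unfolding r3_def by auto
  have q3b: "r3 < R3" unfolding r3_def using Rq3 by auto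
  have q3c: "0 < r3" unfolding r3_def using add_nonneg_pos[OF norm_ge_zero[of "snd (snd q)"] le_less_trans[OF norm_ge_zero Rq3]] by simp
  note q3 = q3a q3b q3c
  define K where "K = pd r1 r2 r3"
  have qK: "q \<in> K" using q1 q2 q3 by (simp add: K_def pd_def)
  have mP: "msum (mulc a P) (dec P) Q S r1 r2 r3" by (rule msum_dP[OF m]) (use q1 q2 q3 in auto)
  have mQ: "msum (mulc a Q) P (dec Q) S r1 r2 r3" by (rule msum_dQ[OF m]) (use q1 q2 q3 in auto)
  have mS: "msum (mulc a S) P Q (dec S) r1 r2 r3" by (rule msum_dS[OF m]) (use q1 q2 q3 in auto)
  have m0: "msum a P Q S r1 r2 r3" by (rule msum_mono[OF m]) (use q1 q2 q3 in auto)
  note uP = ser_unif[OF mP, folded K_def]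
  note uQ = ser_unif[OF mQ, folded K_def]
  note uS = ser_unif[OF mS, folded K_def]
  note u0 = ser_unif[OF m0, folded K_def]
  define f where "f = (\<lambda>n q. \<Sum>\<alpha>\<in>Bx n. trm a P Q S \<alpha> q)"
  define f' where "f' = (\<lambda>n q h. (\<Sum>\<alpha>\<in>Bx n. trm (mulc a P) (dec P) Q S \<alpha> q) * fst h
      + (\<Sum>\<alpha>\<in>Bx n. trm (mulc a Q) P (dec Q) S \<alpha> q) * fst (snd h) + (\<Sum>\<alpha>\<in>Bx n. trm (mulc a S) P Q (dec S) \<alpha> q) * snd (snd h))"
  have "\<exists>g. \<forall>x\<in>K. (\<lambda>n. f n x) \<longlonglongrightarrow> g x \<and> (g has_derivative Dser a P Q S x) (at x within K)"
  proof (rule has_derivative_sequence[where f'=f'])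
    show "convex K" by (simp add: K_def convex_pd)
    show "(f n has_derivative f' n x) (at x within K)" if "x \<in> K" for n x
    proof -
      have "(f n has_derivative (\<lambda>h. \<Sum>\<alpha>\<in>Bx n. trm (mulc a P) (dec P) Q S \<alpha> x * fst h
      + trm (mulc a Q) P (dec Q) S \<alpha> x * fst (snd h) + trm (mulc a S) P Q (dec S) \<alpha> x * snd (snd h))) (at x)"
        unfolding f_def by (rule has_derivative_sum) (rule trm_deriv)
      then have "(f n has_derivative f' n x) (at x)"
        by (simp add: f'_def sum.distrib sum_distrib_right)
      then show ?thesis by (rule has_derivative_at_withinI)
    qed
    show "\<forall>\<^sub>F n in sequentially. \<forall>x\<in>K. \<forall>h. norm (f' n x h - Dser a P Q S x h) \<le> e * norm h" if e: "e > 0" for e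
    proof -
      have e3: "e/3 > 0" using e by simp
      show ?thesis
        using uniform_limitD[OF uP e3] uniform_limitD[OF uQ e3] uniform_limitD[OF uS e3]
      proof eventually_elim
        case (elim n)
        show ?case
        proof (intro ballI allI)
          fix x h assume x: "x \<in> K"
          define A where "A = (\<Sum>\<alpha>\<in>Bx n. trm (mulc a P) (dec P) Q S \<alpha> x) - ser (mulc a P) (dec P) Q S x"
          define B where "B = (\<Sum>\<alpha>\<in>Bx n. trm (mulc a Q) P (dec Q) S \<alpha> x) - ser (mulc a Q) P (dec Q) S x"
          define C where "C = (\<Sum>\<alpha>\<in>Bx n. trm (mulc a S) P Q (dec S) \<alpha> x) - ser (mulc a S) P Q (dec S) x"
          have A: "norm A \<le> e/3" using elim x by (auto simp: A_def dist_norm)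
          have B: "norm B \<le> e/3" using elim x by (auto simp: B_def dist_norm)
          have C: "norm C \<le> e/3" using elim x by (auto simp: C_def dist_norm)
          have "f' n x h - Dser a P Q S x h = A * fst h + B * fst (snd h) + C * snd (snd h)"
            by (simp add: f'_def Dser_def A_def B_def C_def algebra_simps)
          also have "norm \<dots> \<le> norm A * norm (fst h) + norm B * norm (fst (snd h)) + norm C * norm (snd (snd h))"
            by (rule order_trans[OF norm_triangle_ineq] add_mono order_trans[OF norm_triangle_ineq])+
               (auto simp: norm_mult)
          also have "\<dots> \<le> (e/3) * norm h + (e/3) * norm h + (e/3) * norm h"
            using A B C norm_h_le[of h] e by (intro add_mono mult_mono) auto
          finally show "norm (f' n x h - Dser a P Q S x h) \<le> e * norm h" by simp
        qed
      qed
    qed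
    show "q \<in> K" by (rule qK)
    show "(\<lambda>n. f n q) \<longlonglongrightarrow> ser a P Q S q"
      using tendsto_uniform_limitI[OF u0 qK] by (simp add: f_def)
  qed
  then obtain g where g: "\<And>x. x \<in> K \<Longrightarrow> (\<lambda>n. f n x) \<longlonglongrightarrow> g x \<and> (g has_derivative Dser a P Q S x) (at x within K)"
    by blast
  have "(ser a P Q S has_derivative Dser a P Q S q) (at q within K)"
  proof (rule has_derivative_transform_within_open[OF _ _ qK])
    show "(g has_derivative Dser a P Q S q) (at q within K)" using g qK by blast
    show "open K" by (simp add: K_def open_pd)
    show "g x = ser a P Q S x" if "x \<in> K" for x
    proof -
      have "(\<lambda>n. f n x) \<longlonglongrightarrow> ser a P Q S x"
        using tendsto_uniform_limitI[OF u0 that] by (simp add: f_def)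
      then show ?thesis using LIMSEQ_unique conjunct1[OF g[OF that]] by blast
    qed
  qed
  then show ?thesis using at_within_open[OF qK] open_pd K_def by metis
qed



definition smul :: "complex \<Rightarrow> c3 \<Rightarrow> c3" where
  "smul s p = (s * fst p, s * fst (snd p), s * snd (snd p))"

lemma monom_smul: "monom3 \<alpha> (smul s p) = s ^ deg \<alpha> * monom3 \<alpha> p"
  by (cases \<alpha>; cases p) (simp add: monom3_def smul_def deg_def power_mult_distrib power_add)

lemma finite_deg: "finite {\<alpha>. deg \<alpha> = d}"
  by (rule finite_subset[of _ "{..d} \<times> {..d} \<times> {..d}"]) (auto simp: deg_def)

lemma hpart_smul: "hpart c d (smul s p) = s ^ d * hpart c d p"
  unfolding hpart_def sum_distrib_left
  by (rule sum.cong) (auto simp: monom_smul)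

definition Pj :: "nat \<Rightarrow> idx \<Rightarrow> nat" where "Pj j \<alpha> = (if j = 0 then fst (snd \<alpha>) else fst \<alpha>)"
definition Qj :: "nat \<Rightarrow> idx \<Rightarrow> nat" where "Qj j \<alpha> = (if j = 0 \<or> j = 1 then snd (snd \<alpha>) else fst (snd \<alpha>))"

lemma monom_dehom: "monom3 \<alpha> (dehom j (u, v)) = u ^ Pj j \<alpha> * v ^ Qj j \<alpha>"
  by (cases \<alpha>) (auto simp: monom3_def dehom_def Pj_def Qj_def)

lemma dehom_aff: "coordc j w \<noteq> 0 \<Longrightarrow> dehom j (aff j w) = smul (1 / coordc j w) w"
  by (cases "j = 0"; cases "j = 1"; cases w) (auto simp: dehom_def aff_def coordc_def smul_def field_simps)

lemma smul_dehom_aff: "coordc j x \<noteq> 0 \<Longrightarrow> smul (coordc j x) (dehom j (aff j x)) = x"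
  by (cases "j = 0"; cases "j = 1"; cases x) (auto simp: dehom_def aff_def coordc_def smul_def field_simps)

lemma hpart_aff: "coordc j x \<noteq> 0 \<Longrightarrow> hpart c d x = coordc j x ^ d * hpart c d (dehom j (aff j x))"
  using hpart_smul[of c d "coordc j x" "dehom j (aff j x)"] smul_dehom_aff[of j x] by simp

definition ad :: "(idx \<Rightarrow> complex) \<Rightarrow> nat \<Rightarrow> idx \<Rightarrow> complex" where
  "ad c d \<alpha> = (if deg \<alpha> = d then c \<alpha> else 0)"

definition Z :: "idx \<Rightarrow> nat" where "Z = (\<lambda>_. 0)"

lemma ser_ad: "ser (ad c d) (Pj j) (Qj j) Z q = hpart c d (dehom j (fst q, fst (snd q)))"
proof -
  have "ser (ad c d) (Pj j) (Qj j) Z q = (\<Sum>\<^sub>\<infinity>\<alpha>\<in>{\<alpha>. deg \<alpha> = d}. trm (ad c d) (Pj j) (Qj j) Z \<alpha> q)"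
    unfolding ser_def by (rule infsum_cong_neutral) (auto simp: trm_def ad_def)
  also have "\<dots> = (\<Sum>\<alpha>\<in>{\<alpha>. deg \<alpha> = d}. trm (ad c d) (Pj j) (Qj j) Z \<alpha> q)"
    by (rule infsum_finite[OF finite_deg])
  also have "\<dots> = hpart c d (dehom j (fst q, fst (snd q)))"
    unfolding hpart_def by (rule sum.cong) (auto simp: trm_def ad_def Z_def monom_dehom)
  finally show ?thesis .
qed

lemma msum_ad: "msum (ad c d) P Q S R1 R2 R3"
  unfolding msum_def
  by (subst summable_on_cong_neutral[where T="{\<alpha>. deg \<alpha> = d}" and g="\<lambda>\<alpha>. norm (ad c d \<alpha>) * R1 ^ P \<alpha> * R2 ^ Q \<alpha> * R3 ^ S \<alpha>"])
     (auto simp: ad_def finite_deg)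


definition ag :: "(idx \<Rightarrow> complex) \<Rightarrow> nat \<Rightarrow> nat \<Rightarrow> idx \<Rightarrow> complex" where
  "ag c m k \<alpha> = (if m + k \<le> deg \<alpha> then c \<alpha> else 0)"
definition Sg :: "nat \<Rightarrow> nat \<Rightarrow> idx \<Rightarrow> nat" where "Sg m k \<alpha> = deg \<alpha> - (m + k)"

lemma strict_split:
  assumes low: "\<forall>\<alpha>. deg \<alpha> < m \<longrightarrow> c \<alpha> = 0"
    and gap: "\<forall>\<alpha>. m < deg \<alpha> \<and> deg \<alpha> < m + k \<longrightarrow> c \<alpha> = 0"
    and k: "k \<ge> 1"
    and ms: "msum (ag c m k) (Pj j) (Qj j) (Sg m k) R1 R2 R3"
    and q: "norm (fst q) \<le> R1" "norm (fst (snd q)) \<le> R2" "norm (snd (snd q)) \<le> R3"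
  shows "strict c m j q = hpart c m (dehom j (fst q, fst (snd q)))
           + snd (snd q) ^ k * ser (ag c m k) (Pj j) (Qj j) (Sg m k) q"
proof -
  obtain u v t where qe: "q = (u, v, t)" by (cases q) auto
  have pw: "c \<alpha> * monom3 \<alpha> (dehom j (u, v)) * t ^ (deg \<alpha> - m)
      = trm (ad c m) (Pj j) (Qj j) Z \<alpha> q + t ^ k * trm (ag c m k) (Pj j) (Qj j) (Sg m k) \<alpha> q" for \<alpha>
  proof -
    consider "deg \<alpha> < m" | "deg \<alpha> = m" | "m < deg \<alpha> \<and> deg \<alpha> < m + k" | "m + k \<le> deg \<alpha>" by linarith
    then show ?thesis
    proof cases
      case 1 then have "c \<alpha> = 0" using low by blast
      then show ?thesis using 1 k by (auto simp: trm_def ad_def ag_def)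
    next
      case 2 then show ?thesis using k by (auto simp: trm_def ad_def ag_def qe Z_def monom_dehom)
    next
      case 3 then have "c \<alpha> = 0" using gap by blast
      then show ?thesis using 3 by (auto simp: trm_def ad_def ag_def)
    next
      case 4
      then have "t ^ (deg \<alpha> - m) = t ^ k * t ^ (deg \<alpha> - (m + k))"
        by (simp flip: power_add)
      then show ?thesis using 4 k by (auto simp: trm_def ad_def ag_def qe Sg_def monom_dehom)
    qed
  qed
  have s1: "(\<lambda>\<alpha>. trm (ad c m) (Pj j) (Qj j) Z \<alpha> q) summable_on UNIV"
    by (rule msum_summable[OF msum_ad order_refl order_refl order_refl])
  have s2: "(\<lambda>\<alpha>. trm (ag c m k) (Pj j) (Qj j) (Sg m k) \<alpha> q) summable_on UNIV"
    by (rule msum_summable[OF ms q])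
  have "strict c m j q = (\<Sum>\<^sub>\<infinity>\<alpha>. trm (ad c m) (Pj j) (Qj j) Z \<alpha> q + t ^ k * trm (ag c m k) (Pj j) (Qj j) (Sg m k) \<alpha> q)"
    unfolding strict_def qe using pw by (simp add: qe)
  also have "\<dots> = ser (ad c m) (Pj j) (Qj j) Z q + t ^ k * ser (ag c m k) (Pj j) (Qj j) (Sg m k) q"
    unfolding ser_def
    by (subst infsum_add[OF s1 summable_on_cmult_right[OF s2]], subst infsum_cmult_right[OF s2]) simp
  finally show ?thesis by (simp add: ser_ad qe)
qed

lemma strict_t0:
  assumes low: "\<forall>\<alpha>. deg \<alpha> < m \<longrightarrow> c \<alpha> = 0"
  shows "strict c m j (u, v, 0) = hpart c m (dehom j (u, v))"
proof -
  have "strict c m j (u, v, 0) = ser (ad c m) (Pj j) (Qj j) Z (u, v, 0)"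
    unfolding strict_def ser_def
  proof (simp, rule infsum_cong)
    fix \<alpha>
    show "c \<alpha> * monom3 \<alpha> (dehom j (u, v)) * 0 ^ (deg \<alpha> - m) = trm (ad c m) (Pj j) (Qj j) Z \<alpha> (u, v, 0)"
      using low[rule_format, of \<alpha>] by (cases "deg \<alpha> < m"; cases "deg \<alpha> = m") (auto simp: trm_def ad_def Z_def monom_dehom)
  qed
  then show ?thesis by (simp add: ser_ad)
qed

lemma ser_ag_t0: "ser (ag c m k) (Pj j) (Qj j) (Sg m k) (u, v, 0) = hpart c (m + k) (dehom j (u, v))"
proof -
  have "ser (ag c m k) (Pj j) (Qj j) (Sg m k) (u, v, 0) = ser (ad c (m + k)) (Pj j) (Qj j) Z (u, v, 0)"
    unfolding ser_def
    by (rule infsum_cong) (auto simp: trm_def ad_def ag_def Sg_def Z_def)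
  then show ?thesis by (simp add: ser_ad)
qed

lemma msum_ag:
  assumes conv: "converges_on_ball c r" and T: "T > 0" and R: "R1 > 0" "R2 > 0"
    and small: "T * (1 + R1 + R2) < r"
  shows "msum (ag c m k) (Pj j) (Qj j) (Sg m k) R1 R2 T"
proof -
  define X where "X = smul (of_real T) (dehom j (of_real R1, of_real R2))"
  have "norm X \<le> T * (1 + R1 + R2)"
  proof -
    have "norm X \<le> norm (fst X) + (norm (fst (snd X)) + norm (snd (snd X)))"
      using norm_Pair_le[of "fst X" "snd X"] norm_Pair_le[of "fst (snd X)" "snd (snd X)"] by simp
    also have "\<dots> \<le> T * (1 + R1 + R2)"
      using T R by (auto simp: X_def smul_def dehom_def norm_mult algebra_simps)
    finally show ?thesis .
  qed
  then have "X \<in> ball 0 r" using small by (simp add: dist_norm)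
  then have sm: "(\<lambda>\<alpha>. norm (c \<alpha> * monom3 \<alpha> X)) summable_on UNIV"
    using conv by (auto simp: converges_on_ball_def)
  have nX: "norm (c \<alpha> * monom3 \<alpha> X) = norm (c \<alpha>) * T ^ deg \<alpha> * R1 ^ Pj j \<alpha> * R2 ^ Qj j \<alpha>" for \<alpha>
    using T R by (simp add: X_def monom_smul monom_dehom norm_mult norm_power)
  show ?thesis unfolding msum_def
  proof (rule summable_on_comparison_test)
    show "(\<lambda>\<alpha>. inverse (T ^ (m + k)) * norm (c \<alpha> * monom3 \<alpha> X)) summable_on UNIV"
      by (rule summable_on_cmult_right[OF sm])
    fix \<alpha>
    show "0 \<le> norm (ag c m k \<alpha>) * R1 ^ Pj j \<alpha> * R2 ^ Qj j \<alpha> * T ^ Sg m k \<alpha>" using T R by simp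
    show "norm (ag c m k \<alpha>) * R1 ^ Pj j \<alpha> * R2 ^ Qj j \<alpha> * T ^ Sg m k \<alpha> \<le> inverse (T ^ (m + k)) * norm (c \<alpha> * monom3 \<alpha> X)"
    proof (cases "m + k \<le> deg \<alpha>")
      case True
      then have "T ^ Sg m k \<alpha> = T ^ deg \<alpha> / T ^ (m + k)" using T by (simp add: Sg_def power_diff)
      then show ?thesis using True T by (simp add: ag_def nX field_simps)
    next
      case False then show ?thesis using T R by (simp add: ag_def nX)
    qed
  qed
qed



lemma coordc_eq: "coordc j = (if j = 0 then (\<lambda>x. fst x) else if j = 1 then (\<lambda>x. fst (snd x)) else (\<lambda>x. snd (snd x)))"
  by (auto simp: fun_eq_iff coordc_def split: prod.split)

lemma aff_eq: "aff j = (if j = 0 then (\<lambda>x. (fst (snd x) / fst x, snd (snd x) / fst x))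
   else if j = 1 then (\<lambda>x. (fst x / fst (snd x), snd (snd x) / fst (snd x)))
   else (\<lambda>x. (fst x / snd (snd x), fst (snd x) / snd (snd x))))"
  by (auto simp: fun_eq_iff aff_def split: prod.split)

lemma dehom_eq: "dehom j = (if j = 0 then (\<lambda>p. (1, fst p, snd p)) else if j = 1 then (\<lambda>p. (fst p, 1, snd p))
   else (\<lambda>p. (fst p, snd p, 1)))"
  by (auto simp: fun_eq_iff dehom_def split: prod.split)

lemma smul_eq: "smul s = (\<lambda>p. (s * fst p, s * fst (snd p), s * snd (snd p)))"
  by (auto simp: fun_eq_iff smul_def)

lemma coordc_deriv: "\<exists>D. (coordc j has_derivative D) (at w)"
  unfolding coordc_eq
  apply (cases "j = 0"; cases "j = 1"; simp)
  by (rule exI, (rule derivative_intros)+)+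

lemma aff_deriv:
  assumes "coordc j w \<noteq> 0" shows "\<exists>D. (aff j has_derivative D) (at w)"
proof -
  consider "j = 0" | "j = 1" | "j \<noteq> 0 \<and> j \<noteq> 1" by blast
  then show ?thesis
  proof cases
    case 1
    then have nz: "fst w \<noteq> 0" using assms by (cases w) (simp add: coordc_def)
    show ?thesis unfolding aff_eq using 1 apply simp
      by (rule exI, (rule derivative_intros nz)+)
  next
    case 2
    then have nz: "fst (snd w) \<noteq> 0" using assms by (cases w) (simp add: coordc_def)
    show ?thesis unfolding aff_eq using 2 apply simp
      by (rule exI, (rule derivative_intros nz)+)
  next
    case 3
    then have nz: "snd (snd w) \<noteq> 0" using assms by (cases w) (simp add: coordc_def)
    show ?thesis unfolding aff_eq using 3 apply simp
      by (rule exI, (rule derivative_intros nz)+)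
  qed
qed

lemma dehom_deriv: "\<exists>D. (dehom j has_derivative D) (at p)"
  unfolding dehom_eq
  apply (cases "j = 0"; cases "j = 1"; simp)
  by (rule exI, (rule derivative_intros)+)+

lemma smul_deriv: "(smul s has_derivative smul s) (at p)"
  unfolding smul_eq by (auto intro!: derivative_eq_intros)

lemma open_coordc: "open {x. coordc j x \<noteq> 0}"
  unfolding coordc_eq by (cases "j = 0"; cases "j = 1") (auto intro!: open_Collect_neq continuous_intros)

lemma sing_to_chart:
  assumes cw: "coordc j w \<noteq> 0" and d: "(hpart c m has_derivative (\<lambda>_. 0)) (at w)"
  shows "((\<lambda>p. hpart c m (dehom j p)) has_derivative (\<lambda>_. 0)) (at (aff j w))"
proof -
  define s where "s = coordc j w"
  have s: "s \<noteq> 0" using cw by (simp add: s_def)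
  define y0 where "y0 = dehom j (aff j w)"
  have y0: "y0 = smul (1 / s) w" using dehom_aff[OF cw] by (simp add: y0_def s_def)
  have sy0: "smul s y0 = w" using s by (cases w) (simp add: y0 smul_def)
  have e: "hpart c m = (\<lambda>y. inverse (s ^ m) * hpart c m (smul s y))"
    using s by (simp add: fun_eq_iff hpart_smul)
  have "((\<lambda>y. hpart c m (smul s y)) has_derivative (\<lambda>h. 0)) (at y0)"
    using has_derivative_compose[of "smul s" "smul s" y0 UNIV "hpart c m" "\<lambda>_. 0"] smul_deriv d sy0 by simp
  then have "((\<lambda>y. inverse (s ^ m) * hpart c m (smul s y)) has_derivative (\<lambda>h. inverse (s ^ m) * 0)) (at y0)"
    by (rule has_derivative_mult_right)
  then have dy0: "(hpart c m has_derivative (\<lambda>_. 0)) (at y0)" by (subst e) simp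
  obtain D where D: "(dehom j has_derivative D) (at (aff j w))" using dehom_deriv by blast
  show ?thesis
    using has_derivative_compose[OF D, of "hpart c m" "\<lambda>_. 0"] dy0 by (simp add: y0_def)
qed

lemma chart_to_sing:
  assumes cw: "coordc j w \<noteq> 0" and f0: "hpart c m w = 0"
    and d: "((\<lambda>p. hpart c m (dehom j p)) has_derivative (\<lambda>_. 0)) (at (aff j w))"
  shows "(hpart c m has_derivative (\<lambda>_. 0)) (at w)"
proof -
  obtain D1 where D1: "(coordc j has_derivative D1) (at w)" using coordc_deriv by blast
  obtain D2 where D2: "(aff j has_derivative D2) (at w)" using aff_deriv[OF cw] by blast
  have h0w: "hpart c m (dehom j (aff j w)) = 0"
    using dehom_aff[OF cw] hpart_smul f0 by simp
  have d3: "((\<lambda>x. hpart c m (dehom j (aff j x))) has_derivative (\<lambda>_. 0)) (at w)"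
    using has_derivative_compose[OF D2 d] by simp
  have "((\<lambda>x. coordc j x ^ m * hpart c m (dehom j (aff j x))) has_derivative
      (\<lambda>h. coordc j w ^ m * 0 + (of_nat m * D1 h * coordc j w ^ (m - 1)) * hpart c m (dehom j (aff j w)))) (at w)"
    by (rule has_derivative_mult[OF has_derivative_power[OF D1] d3])
  then have dd: "((\<lambda>x. coordc j x ^ m * hpart c m (dehom j (aff j x))) has_derivative (\<lambda>_. 0)) (at w)"
    by (simp add: h0w)
  show ?thesis
    by (rule has_derivative_transform_within_open[OF dd open_coordc, of j]) (use cw hpart_aff in auto)
qed



lemma ser_isCont: "msum b P Q S r1 r2 r3 \<Longrightarrow> q \<in> pd r1 r2 r3 \<Longrightarrow> isCont (ser b P Q S) q"
  using has_derivative_continuous[OF ser_deriv] by blast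

lemma ser_cont: "msum a P Q S R1 R2 R3 \<Longrightarrow> continuous_on (pd R1 R2 R3) (ser a P Q S)"
  by (intro continuous_at_imp_continuous_on ballI ser_isCont)

lemma pd_mid:
  assumes "q \<in> pd R1 R2 R3"
  shows "norm (fst q) < (norm (fst q) + R1) / 2" "(norm (fst q) + R1) / 2 < R1" "0 < (norm (fst q) + R1) / 2"
    "norm (fst (snd q)) < (norm (fst (snd q)) + R2) / 2" "(norm (fst (snd q)) + R2) / 2 < R2" "0 < (norm (fst (snd q)) + R2) / 2"
    "norm (snd (snd q)) < (norm (snd (snd q)) + R3) / 2" "(norm (snd (snd q)) + R3) / 2 < R3" "0 < (norm (snd (snd q)) + R3) / 2"
    "0 < R1" "0 < R2" "0 < R3"
proof -
  have a: "norm (fst q) < R1" "norm (fst (snd q)) < R2" "norm (snd (snd q)) < R3" using assms by (auto simp: pd_def)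
  have b: "0 \<le> norm (fst q)" "0 \<le> norm (fst (snd q))" "0 \<le> norm (snd (snd q))" by auto
  have c: "0 < R1" "0 < R2" "0 < R3" using a b by linarith+
  then show "norm (fst q) < (norm (fst q) + R1) / 2" "(norm (fst q) + R1) / 2 < R1" "0 < (norm (fst q) + R1) / 2"
    "norm (fst (snd q)) < (norm (fst (snd q)) + R2) / 2" "(norm (fst (snd q)) + R2) / 2 < R2" "0 < (norm (fst (snd q)) + R2) / 2"
    "norm (snd (snd q)) < (norm (snd (snd q)) + R3) / 2" "(norm (snd (snd q)) + R3) / 2 < R3" "0 < (norm (snd (snd q)) + R3) / 2"
    "0 < R1" "0 < R2" "0 < R3"
    using a by (auto intro: add_nonneg_pos)
qed

lemma serP_cont:
  assumes m: "msum a P Q S R1 R2 R3"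
  shows "continuous_on (pd R1 R2 R3) (ser (mulc a P) (dec P) Q S)"
proof (intro continuous_at_imp_continuous_on ballI)
  fix q assume q: "q \<in> pd R1 R2 R3"
  note pm = pd_mid[OF q]
  have "msum (mulc a P) (dec P) Q S ((norm (fst q) + R1) / 2) R2 R3"
    by (rule msum_dP[OF m]) (use pm in auto)
  moreover have "q \<in> pd ((norm (fst q) + R1) / 2) R2 R3" using q pm by (auto simp: pd_def)
  ultimately show "isCont (ser (mulc a P) (dec P) Q S) q" by (rule ser_isCont)
qed

lemma serQ_cont:
  assumes m: "msum a P Q S R1 R2 R3"
  shows "continuous_on (pd R1 R2 R3) (ser (mulc a Q) P (dec Q) S)"
proof (intro continuous_at_imp_continuous_on ballI)
  fix q assume q: "q \<in> pd R1 R2 R3"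
  note pm = pd_mid[OF q]
  have "msum (mulc a Q) P (dec Q) S R1 ((norm (fst (snd q)) + R2) / 2) R3"
    by (rule msum_dQ[OF m]) (use pm in auto)
  moreover have "q \<in> pd R1 ((norm (fst (snd q)) + R2) / 2) R3" using q pm by (auto simp: pd_def)
  ultimately show "isCont (ser (mulc a Q) P (dec Q) S) q" by (rule ser_isCont)
qed

lemma serS_cont:
  assumes m: "msum a P Q S R1 R2 R3"
  shows "continuous_on (pd R1 R2 R3) (ser (mulc a S) P Q (dec S))"
proof (intro continuous_at_imp_continuous_on ballI)
  fix q assume q: "q \<in> pd R1 R2 R3"
  note pm = pd_mid[OF q]
  have "msum (mulc a S) P Q (dec S) R1 R2 ((norm (snd (snd q)) + R3) / 2)"
    by (rule msum_dS[OF m]) (use pm in auto)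
  moreover have "q \<in> pd R1 R2 ((norm (snd (snd q)) + R3) / 2)" using q pm by (auto simp: pd_def)
  ultimately show "isCont (ser (mulc a S) P Q (dec S)) q" by (rule ser_isCont)
qed

lemma form3: "(\<lambda>(x, y, z). a * x + b * y + d * z) = (\<lambda>h::c3. a * fst h + b * fst (snd h) + d * snd (snd h))"
  by (auto simp: fun_eq_iff split: prod.split)

lemma form2: "(\<lambda>(x, y). a * x + b * y) = (\<lambda>h::c2. a * fst h + b * snd h)"
  by (auto simp: fun_eq_iff split: prod.split)

lemma field_chain:
  assumes "(f has_field_derivative D) (at (g x))" "(g has_derivative g') (at x)"
  shows "((\<lambda>x. f (g x)) has_derivative (\<lambda>h. D * g' h)) (at x)"
  using has_derivative_compose[OF assms(2) assms(1)[unfolded has_field_derivative_def]] by simp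



lemma deriv_cont:
  assumes "\<And>q. q \<in> S \<Longrightarrow> (f has_derivative D q) (at q)"
  shows "continuous_on S f"
proof (intro continuous_at_imp_continuous_on ballI)
  fix q assume "q \<in> S"
  show "isCont f q" by (rule has_derivative_continuous[OF assms[OF \<open>q \<in> S\<close>]])
qed

lemma root_part:
  fixes G :: "c3 \<Rightarrow> complex"
  assumes Om: "open Om" and q0: "q0 \<in> Om" and k: "k \<ge> 1"
    and dG: "\<And>q. q \<in> Om \<Longrightarrow> (G has_derivative (\<lambda>h. Gu q * fst h + Gv q * fst (snd h) + Gt q * snd (snd h))) (at q)"
    and cGu: "continuous_on Om Gu" and cGv: "continuous_on Om Gv" and cGt: "continuous_on Om Gt"
    and g0: "G q0 \<noteq> 0"
  obtains U0 \<rho> \<rho>u \<rho>v \<rho>t where "open U0" "U0 \<subseteq> Om" "q0 \<in> U0"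
    "\<And>q. q \<in> U0 \<Longrightarrow> \<rho> q ^ k = G q" "\<And>q. \<rho> q \<noteq> 0"
    "\<And>q. q \<in> U0 \<Longrightarrow> (\<rho> has_derivative (\<lambda>h. \<rho>u q * fst h + \<rho>v q * fst (snd h) + \<rho>t q * snd (snd h))) (at q)"
    "continuous_on U0 \<rho>" "continuous_on U0 \<rho>u" "continuous_on U0 \<rho>v" "continuous_on U0 \<rho>t"
proof -
  define g0 where "g0 = G q0"
  have g0nz: "g0 \<noteq> 0" using g0 by (simp add: g0_def)
  have cG: "continuous_on Om G"
    by (rule deriv_cont[OF dG])
  define U0 where "U0 = Om \<inter> (\<lambda>q. G q / g0) -` ball 1 1"
  have "continuous_on Om (\<lambda>q. G q / g0)" by (intro continuous_intros cG) (simp add: g0nz)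
  then have "open ((\<lambda>q. G q / g0) -` ball 1 1 \<inter> Om)"
    using continuous_on_open_vimage[OF Om] open_ball by blast
  then have oU0: "open U0" unfolding U0_def by (simp add: Int_commute)
  have q0U: "q0 \<in> U0" using q0 g0nz by (simp add: U0_def g0_def)
  have U0Om: "U0 \<subseteq> Om" by (auto simp: U0_def)
  have nonpos: "G q / g0 \<notin> \<real>\<^sub>\<le>\<^sub>0" if "q \<in> U0" for q
  proof -
    have "dist 1 (G q / g0) < 1" using that by (simp add: U0_def)
    then have "Re (G q / g0) > 0"
      using abs_Re_le_cmod[of "1 - G q / g0"] by (auto simp: dist_norm)
    then show ?thesis by (auto simp: complex_nonpos_Reals_iff)
  qed
  have Gnz: "G q \<noteq> 0" if "q \<in> U0" for q using nonpos[OF that] by auto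
  have kk: "of_nat k \<noteq> (0::complex)" using k by simp
  define c0 where "c0 = exp (Ln g0 / of_nat k)"
  define \<rho> where "\<rho> = (\<lambda>q. c0 * exp (Ln (G q / g0) / of_nat k))"
  have expk: "exp (x / of_nat k) ^ k = exp x" for x :: complex
    using exp_of_nat_mult[of k "x / of_nat k"] kk by simp
  have rk: "\<rho> q ^ k = G q" if "q \<in> U0" for q
  proof -
    have "\<rho> q ^ k = exp (Ln g0) * exp (Ln (G q / g0))"
      by (simp add: \<rho>_def c0_def power_mult_distrib expk)
    also have "\<dots> = G q" using g0nz Gnz[OF that] by simp
    finally show ?thesis .
  qed
  have rnz: "\<rho> q \<noteq> 0" for q by (simp add: \<rho>_def c0_def)
  define \<rho>u where "\<rho>u = (\<lambda>q. \<rho> q * Gu q / (of_nat k * G q))"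
  define \<rho>v where "\<rho>v = (\<lambda>q. \<rho> q * Gv q / (of_nat k * G q))"
  define \<rho>t where "\<rho>t = (\<lambda>q. \<rho> q * Gt q / (of_nat k * G q))"
  have dr: "(\<rho> has_derivative (\<lambda>h. \<rho>u q * fst h + \<rho>v q * fst (snd h) + \<rho>t q * snd (snd h))) (at q)"
    if q: "q \<in> U0" for q
  proof -
    have qO: "q \<in> Om" using q U0Om by auto
    define DG where "DG = (\<lambda>h. Gu q * fst h + Gv q * fst (snd h) + Gt q * snd (snd h))"
    have d1: "((\<lambda>q. G q / g0) has_derivative (\<lambda>h. DG h / g0)) (at q)"
      using has_derivative_divide'[OF dG[OF qO] has_derivative_const, of g0] g0nz
      by (simp add: DG_def)
    have d2: "((\<lambda>q. Ln (G q / g0)) has_derivative (\<lambda>h. inverse (G q / g0) * (DG h / g0))) (at q)"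
      by (rule field_chain[OF has_field_derivative_Ln[OF nonpos[OF q]] d1])
    have d3: "((\<lambda>q. Ln (G q / g0) / of_nat k) has_derivative (\<lambda>h. inverse (G q / g0) * (DG h / g0) / of_nat k)) (at q)"
      using has_derivative_divide'[OF d2 has_derivative_const, of "of_nat k"] kk by simp
    have d4: "((\<lambda>q. exp (Ln (G q / g0) / of_nat k)) has_derivative
        (\<lambda>h. exp (Ln (G q / g0) / of_nat k) * (inverse (G q / g0) * (DG h / g0) / of_nat k))) (at q)"
      by (rule field_chain[OF DERIV_exp d3])
    have d5: "(\<rho> has_derivative (\<lambda>h. c0 * (exp (Ln (G q / g0) / of_nat k) * (inverse (G q / g0) * (DG h / g0) / of_nat k)))) (at q)"
      unfolding \<rho>_def by (rule has_derivative_mult_right[OF d4])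
    show ?thesis
    proof (rule has_derivative_eq_rhs[OF d5], rule ext)
      fix h
      show "c0 * (exp (Ln (G q / g0) / of_nat k) * (inverse (G q / g0) * (DG h / g0) / of_nat k))
          = \<rho>u q * fst h + \<rho>v q * fst (snd h) + \<rho>t q * snd (snd h)" (is "?L = ?R")
      proof -
        have i: "inverse (G q / g0) * (DG h / g0) = DG h / G q" using g0nz by (simp add: field_simps)
        show "?L = ?R" unfolding i \<rho>u_def \<rho>v_def \<rho>t_def \<rho>_def DG_def
          using Gnz[OF q] kk g0nz by (simp add: field_simps)
      qed
    qed
  qed
  have cr: "continuous_on U0 \<rho>"
    by (rule deriv_cont[OF dr])
  have cG0: "continuous_on U0 G" by (rule continuous_on_subset[OF cG U0Om])
  have "continuous_on U0 Gu" "continuous_on U0 Gv" "continuous_on U0 Gt"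
    by (rule continuous_on_subset[OF _ U0Om], fact)+
  then have c3: "continuous_on U0 \<rho>u" "continuous_on U0 \<rho>v" "continuous_on U0 \<rho>t"
    unfolding \<rho>u_def \<rho>v_def \<rho>t_def using Gnz kk
    by (auto intro!: continuous_intros cr cG0)
  show ?thesis by (rule that[OF oU0 U0Om q0U rk rnz dr cr c3])
qed



lemma bl_snd_fst: "bounded_linear (\<lambda>h::c3. fst (snd h))"
  by (rule bounded_linear_compose[OF bounded_linear_fst bounded_linear_snd])
lemma bl_snd_snd: "bounded_linear (\<lambda>h::c3. snd (snd h))"
  by (rule bounded_linear_compose[OF bounded_linear_snd bounded_linear_snd])

lemma holo3_I:
  assumes "open U" "\<And>q. q \<in> U \<Longrightarrow> \<exists>a b d. (f has_derivative (\<lambda>h. a * fst h + b * fst (snd h) + d * snd (snd h))) (at q)"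
  shows "holo3 U f"
  using assms unfolding holo3_def form3 by blast

lemma ift_part:
  fixes \<rho> \<rho>u \<rho>v \<rho>t :: "c3 \<Rightarrow> complex"
  assumes oU0: "open U0" and q0: "(u0, v0, 0) \<in> U0"
    and rnz: "\<And>q. \<rho> q \<noteq> 0"
    and dr: "\<And>q. q \<in> U0 \<Longrightarrow> (\<rho> has_derivative (\<lambda>h. \<rho>u q * fst h + \<rho>v q * fst (snd h) + \<rho>t q * snd (snd h))) (at q)"
    and cr: "continuous_on U0 \<rho>" "continuous_on U0 \<rho>u" "continuous_on U0 \<rho>v" "continuous_on U0 \<rho>t"
  obtains U W where "open U" "U \<subseteq> U0" "(u0, v0, 0) \<in> U"
    "biholo3 U W (\<lambda>q. (fst q - u0, fst (snd q) - v0, snd (snd q) * \<rho> q))"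
proof -
  define q0 :: c3 where "q0 = (u0, v0, 0)"
  define \<Phi> where "\<Phi> = (\<lambda>q::c3. (fst q - u0, fst (snd q) - v0, snd (snd q) * \<rho> q))"
  define \<Phi>' where "\<Phi>' = (\<lambda>q h::c3. (fst h, fst (snd h), snd (snd h) * \<rho> q
      + snd (snd q) * (\<rho>u q * fst h + \<rho>v q * fst (snd h) + \<rho>t q * snd (snd h))))"
  have d1: "((\<lambda>q::c3. fst q - u0) has_derivative (\<lambda>h. fst h)) (at q)" for q
    by (rule has_derivative_eq_rhs, (rule derivative_eq_intros)+) auto
  have d2: "((\<lambda>q::c3. fst (snd q) - v0) has_derivative (\<lambda>h. fst (snd h))) (at q)" for q
    by (rule has_derivative_eq_rhs, (rule derivative_eq_intros)+) auto
  have d3: "((\<lambda>q::c3. snd (snd q)) has_derivative (\<lambda>h. snd (snd h))) (at q)" for q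
    by (rule bounded_linear_imp_has_derivative[OF bl_snd_snd])
  have dP: "(\<Phi> has_derivative \<Phi>' q) (at q)" if q: "q \<in> U0" for q
  proof -
    have "((\<lambda>q. snd (snd q) * \<rho> q) has_derivative
       (\<lambda>h. snd (snd q) * (\<rho>u q * fst h + \<rho>v q * fst (snd h) + \<rho>t q * snd (snd h)) + snd (snd h) * \<rho> q)) (at q)"
      by (rule has_derivative_mult[OF d3 dr[OF q]])
    from has_derivative_Pair[OF d1 has_derivative_Pair[OF d2 this]]
    show ?thesis unfolding \<Phi>_def \<Phi>'_def by (simp add: algebra_simps)
  qed
  have bl: "bounded_linear (\<Phi>' q)" if "q \<in> U0" for q using dP[OF that] by (rule has_derivative_bounded_linear)
  define f' where "f' = (\<lambda>q. Blinfun (\<Phi>' q))"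
  have fa: "blinfun_apply (f' q) = \<Phi>' q" if "q \<in> U0" for q
    using bl[OF that] by (simp add: f'_def bounded_linear_Blinfun_apply)
  have cf': "continuous_on U0 f'"
  proof (rule continuous_on_blinfun_componentwise)
    fix i :: c3
    have "continuous_on U0 (\<lambda>q. \<Phi>' q i)"
      unfolding \<Phi>'_def by (intro continuous_intros cr)
    then show "continuous_on U0 (\<lambda>q. blinfun_apply (f' q) i)"
      by (rule continuous_on_eq) (simp add: fa)
  qed
  define c where "c = \<rho> q0"
  have cnz: "c \<noteq> 0" by (simp add: c_def rnz)
  define invf where "invf = Blinfun (\<lambda>h::c3. (fst h, fst (snd h), snd (snd h) / c))"
  have blinv: "bounded_linear (\<lambda>h::c3. (fst h, fst (snd h), snd (snd h) / c))"
    by (rule bounded_linear_Pair[OF bounded_linear_fst bounded_linear_Pair[OF bl_snd_fst bounded_linear_compose[OF bounded_linear_divide bl_snd_snd]]])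
  have q0U: "q0 \<in> U0" using q0 by (simp add: q0_def)
  have inv0: "invf o\<^sub>L f' q0 = id_blinfun"
  proof (rule blinfun_eqI)
    fix i
    have fa0: "blinfun_apply (f' q0) = \<Phi>' q0" by (rule fa[OF q0U])
    show "blinfun_apply (invf o\<^sub>L f' q0) i = blinfun_apply id_blinfun i"
      unfolding blinfun_apply_blinfun_compose fa0 invf_def bounded_linear_Blinfun_apply[OF blinv]
      using cnz by (simp add: \<Phi>'_def q0_def c_def)
  qed
  have derf: "(\<Phi> has_derivative blinfun_apply (f' x)) (at x)" if "x \<in> U0" for x
    using dP[OF that] fa[OF that] by simp
  show ?thesis
  proof (rule inverse_function_theorem[OF oU0 derf cf' q0U inv0])
  fix U V \<Psi> g' assume U: "open U" "U \<subseteq> U0" "q0 \<in> U" and V: "open V" "\<Phi> q0 \<in> V"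
    and hom: "homeomorphism U V \<Phi> \<Psi>"
    and dPsi: "\<And>y. y \<in> V \<Longrightarrow> (\<Psi> has_derivative g' y) (at y)"
    and g': "\<And>y. y \<in> V \<Longrightarrow> g' y = inv (blinfun_apply (f' (\<Psi> y)))"
    and bij: "\<And>y. y \<in> V \<Longrightarrow> bij (blinfun_apply (f' (\<Psi> y)))"
  have UU0: "\<And>q. q \<in> U \<Longrightarrow> q \<in> U0" using U by auto
  have PsiU: "\<Psi> y \<in> U" if "y \<in> V" for y using hom that unfolding homeomorphism_def by blast
  have PsiPhi: "\<Psi> (\<Phi> q) = q" if "q \<in> U" for q using hom that unfolding homeomorphism_def by blast
  have PhiU: "\<Phi> ` U = V" using hom unfolding homeomorphism_def by blast
  have holo_Phi: "holo_map3 U \<Phi>"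
    unfolding holo_map3_def
  proof (intro conjI)
    show "holo3 U (\<lambda>q. fst (\<Phi> q))"
    proof (rule holo3_I[OF U(1)])
      fix q assume "q \<in> U"
      have "((\<lambda>q. fst (\<Phi> q)) has_derivative (\<lambda>h. 1 * fst h + 0 * fst (snd h) + 0 * snd (snd h))) (at q)"
        unfolding \<Phi>_def using d1 by simp
      then show "\<exists>a b d. ((\<lambda>q. fst (\<Phi> q)) has_derivative (\<lambda>h. a * fst h + b * fst (snd h) + d * snd (snd h))) (at q)" by blast
    qed
    show "holo3 U (\<lambda>q. fst (snd (\<Phi> q)))"
    proof (rule holo3_I[OF U(1)])
      fix q assume "q \<in> U"
      have "((\<lambda>q. fst (snd (\<Phi> q))) has_derivative (\<lambda>h. 0 * fst h + 1 * fst (snd h) + 0 * snd (snd h))) (at q)"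
        unfolding \<Phi>_def using d2 by simp
      then show "\<exists>a b d. ((\<lambda>q. fst (snd (\<Phi> q))) has_derivative (\<lambda>h. a * fst h + b * fst (snd h) + d * snd (snd h))) (at q)" by blast
    qed
    show "holo3 U (\<lambda>q. snd (snd (\<Phi> q)))"
    proof (rule holo3_I[OF U(1)])
      fix q assume q: "q \<in> U"
      have "((\<lambda>q. snd (snd (\<Phi> q))) has_derivative (\<lambda>h. snd (snd (\<Phi>' q h)))) (at q)"
        by (rule bounded_linear.has_derivative[OF bl_snd_snd dP[OF UU0[OF q]]])
      moreover have "(\<lambda>h. snd (snd (\<Phi>' q h))) = (\<lambda>h. (snd (snd q) * \<rho>u q) * fst h + (snd (snd q) * \<rho>v q) * fst (snd h)
          + (\<rho> q + snd (snd q) * \<rho>t q) * snd (snd h))"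
        by (simp add: \<Phi>'_def fun_eq_iff algebra_simps)
      ultimately show "\<exists>a b d. ((\<lambda>q. snd (snd (\<Phi> q))) has_derivative (\<lambda>h. a * fst h + b * fst (snd h) + d * snd (snd h))) (at q)"
        by auto
    qed
  qed
  have holo_Psi: "holo_map3 V \<Psi>"
  proof -
    have dPsi': "(\<Psi> has_derivative (\<lambda>h. (fst h, fst (snd h),
        (snd (snd h) - snd (snd (\<Psi> y)) * (\<rho>u (\<Psi> y) * fst h + \<rho>v (\<Psi> y) * fst (snd h)))
          / (\<rho> (\<Psi> y) + snd (snd (\<Psi> y)) * \<rho>t (\<Psi> y))))) (at y)" if y: "y \<in> V" for y
    proof -
      define q where "q = \<Psi> y"
      have qU0: "q \<in> U0" using PsiU[OF y] UU0 by (simp add: q_def)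
      have bq: "bij (\<Phi>' q)" using bij[OF y] fa[OF qU0] by (simp add: q_def)
      define den where "den = \<rho> q + snd (snd q) * \<rho>t q"
      have dnz: "den \<noteq> 0"
      proof
        assume "den = 0"
        then have "\<Phi>' q (0, 0, 1) = \<Phi>' q (0, 0, 0)" by (simp add: \<Phi>'_def den_def)
        then have "(0, 0, 1) = ((0, 0, 0)::c3)" by (rule injD[OF bij_is_inj[OF bq]])
        then show False by simp
      qed
      define M where "M = (\<lambda>h::c3. (fst h, fst (snd h),
        (snd (snd h) - snd (snd q) * (\<rho>u q * fst h + \<rho>v q * fst (snd h))) / den))"
      have "inv (\<Phi>' q) = M"
      proof (rule inv_equality)
        fix h
        have a: "snd (snd (\<Phi>' q h)) - snd (snd q) * (\<rho>u q * fst h + \<rho>v q * fst (snd h)) = snd (snd h) * den"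
          by (simp add: \<Phi>'_def den_def algebra_simps)
        have "M (\<Phi>' q h) = (fst h, fst (snd h), snd (snd h) * den / den)"
          unfolding M_def a[symmetric] by (simp add: \<Phi>'_def)
        then show "M (\<Phi>' q h) = h" using dnz by simp
      next
        fix h
        define X where "X = snd (snd h) - snd (snd q) * (\<rho>u q * fst h + \<rho>v q * fst (snd h))"
        define Y where "Y = X / den"
        have e1: "Y * den = X" using dnz by (simp add: Y_def)
        have "\<Phi>' q (M h) = (fst h, fst (snd h), Y * \<rho> q + snd (snd q) * (\<rho>u q * fst h + \<rho>v q * fst (snd h) + \<rho>t q * Y))"
          by (simp add: M_def \<Phi>'_def Y_def X_def)
        also have "Y * \<rho> q + snd (snd q) * (\<rho>u q * fst h + \<rho>v q * fst (snd h) + \<rho>t q * Y)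
            = Y * den + snd (snd q) * (\<rho>u q * fst h + \<rho>v q * fst (snd h))"
          unfolding den_def by (simp add: algebra_simps)
        also have "Y * den + snd (snd q) * (\<rho>u q * fst h + \<rho>v q * fst (snd h)) = snd (snd h)"
          unfolding e1 X_def by simp
        finally show "\<Phi>' q (M h) = h" by simp
      qed
      then have "g' y = M" using g'[OF y] fa[OF qU0] by (simp add: q_def)
      then show ?thesis using dPsi[OF y] by (simp add: M_def den_def q_def)
    qed
    show ?thesis unfolding holo_map3_def
    proof (intro conjI)
      show "holo3 V (\<lambda>q. fst (\<Psi> q))"
      proof (rule holo3_I[OF V(1)])
        fix y assume y: "y \<in> V"
        have "((\<lambda>q. fst (\<Psi> q)) has_derivative (\<lambda>h. 1 * fst h + 0 * fst (snd h) + 0 * snd (snd h))) (at y)"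
          using bounded_linear.has_derivative[OF bounded_linear_fst dPsi'[OF y]] by simp
        then show "\<exists>a b d. ((\<lambda>q. fst (\<Psi> q)) has_derivative (\<lambda>h. a * fst h + b * fst (snd h) + d * snd (snd h))) (at y)" by blast
      qed
      show "holo3 V (\<lambda>q. fst (snd (\<Psi> q)))"
      proof (rule holo3_I[OF V(1)])
        fix y assume y: "y \<in> V"
        have "((\<lambda>q. fst (snd (\<Psi> q))) has_derivative (\<lambda>h. 0 * fst h + 1 * fst (snd h) + 0 * snd (snd h))) (at y)"
          using bounded_linear.has_derivative[OF bl_snd_fst dPsi'[OF y]] by simp
        then show "\<exists>a b d. ((\<lambda>q. fst (snd (\<Psi> q))) has_derivative (\<lambda>h. a * fst h + b * fst (snd h) + d * snd (snd h))) (at y)" by blast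
      qed
      show "holo3 V (\<lambda>q. snd (snd (\<Psi> q)))"
      proof (rule holo3_I[OF V(1)])
        fix y assume y: "y \<in> V"
        define q where "q = \<Psi> y"
        define den where "den = \<rho> q + snd (snd q) * \<rho>t q"
        have dd: "((\<lambda>q. snd (snd (\<Psi> q))) has_derivative (\<lambda>h. (snd (snd h) - snd (snd q) * (\<rho>u q * fst h + \<rho>v q * fst (snd h))) / den)) (at y)"
          using bounded_linear.has_derivative[OF bl_snd_snd dPsi'[OF y]] by (simp add: q_def den_def)
        define Dn where "Dn = inverse den"
        have ee: "(\<lambda>h. (snd (snd h) - snd (snd q) * (\<rho>u q * fst h + \<rho>v q * fst (snd h))) / den)
          = (\<lambda>h. (- (snd (snd q) * \<rho>u q) * Dn) * fst h + (- (snd (snd q) * \<rho>v q) * Dn) * fst (snd h) + Dn * snd (snd h))"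
        proof (rule ext)
          fix h :: c3
          have "(snd (snd h) - snd (snd q) * (\<rho>u q * fst h + \<rho>v q * fst (snd h))) / den
             = (snd (snd h) - snd (snd q) * (\<rho>u q * fst h + \<rho>v q * fst (snd h))) * Dn"
            by (simp add: Dn_def divide_inverse)
          also have "\<dots> = (- (snd (snd q) * \<rho>u q) * Dn) * fst h + (- (snd (snd q) * \<rho>v q) * Dn) * fst (snd h) + Dn * snd (snd h)"
            by (simp add: algebra_simps)
          finally show "(snd (snd h) - snd (snd q) * (\<rho>u q * fst h + \<rho>v q * fst (snd h))) / den
            = (- (snd (snd q) * \<rho>u q) * Dn) * fst h + (- (snd (snd q) * \<rho>v q) * Dn) * fst (snd h) + Dn * snd (snd h)" .
        qed
        show "\<exists>a b d. ((\<lambda>q. snd (snd (\<Psi> q))) has_derivative (\<lambda>h. a * fst h + b * fst (snd h) + d * snd (snd h))) (at y)"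
          using dd unfolding ee by blast
      qed
    qed
  qed
  have "biholo3 U V \<Phi>"
    unfolding biholo3_def
  proof (intro conjI exI[of _ \<Psi>] ballI)
    show "open U" "open V" by fact+
    show "holo_map3 U \<Phi>" by (rule holo_Phi)
    show "bij_betw \<Phi> U V" unfolding bij_betw_def using PhiU PsiPhi by (metis inj_on_inverseI)
    show "holo_map3 V \<Psi>" by (rule holo_Psi)
    show "\<Psi> (\<Phi> q) = q" if "q \<in> U" for q using PsiPhi[OF that] .
  qed
  then show ?thesis using that U unfolding \<Phi>_def q0_def by blast
  qed
qed



lemma emb_deriv: "((\<lambda>p::c2. (fst p + a, snd p + b, 0::complex)) has_derivative (\<lambda>h. (fst h, snd h, 0))) (at p)"
proof -
  have d1: "((\<lambda>p::c2. fst p + a) has_derivative (\<lambda>h. fst h)) (at p)"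
    by (rule has_derivative_eq_rhs, (rule derivative_eq_intros)+) auto
  have d2: "((\<lambda>p::c2. snd p + b) has_derivative (\<lambda>h. snd h)) (at p)"
    by (rule has_derivative_eq_rhs, (rule derivative_eq_intros)+) auto
  show ?thesis by (rule has_derivative_Pair[OF d1 has_derivative_Pair[OF d2 has_derivative_const]])
qed

lemma H0_deriv:
  "(ser (ad c m) (Pj j) (Qj j) Z has_derivative Dser (ad c m) (Pj j) (Qj j) Z q) (at q)"
proof (rule ser_deriv[OF msum_ad])
  show "q \<in> pd (norm (fst q) + 1) (norm (fst (snd q)) + 1) (norm (snd (snd q)) + 1)" by (simp add: pd_def)
qed

lemma h0_deriv:
  "((\<lambda>p. hpart c m (dehom j (fst p + a, snd p + b))) has_derivative
     (\<lambda>h. ser (mulc (ad c m) (Pj j)) (dec (Pj j)) (Qj j) Z (fst p + a, snd p + b, 0) * fst h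
        + ser (mulc (ad c m) (Qj j)) (Pj j) (dec (Qj j)) Z (fst p + a, snd p + b, 0) * snd h)) (at p)"
proof -
  have e: "(\<lambda>p. hpart c m (dehom j (fst p + a, snd p + b))) = (\<lambda>p. ser (ad c m) (Pj j) (Qj j) Z (fst p + a, snd p + b, 0))"
    by (simp add: ser_ad)
  show ?thesis unfolding e
    using has_derivative_compose[OF emb_deriv[of a b p] H0_deriv[of c m j]] by (simp add: Dser_def)
qed

theorem lemma5p1:
  fixes c :: "nat \<times> nat \<times> nat \<Rightarrow> complex" and m k :: nat and r :: real
    and w :: c3 and j :: nat
  assumes conv: "converges_on_ball c r"
    and low: "\<forall>\<alpha>. deg \<alpha> < m \<longrightarrow> c \<alpha> = 0"
    and gap: "\<forall>\<alpha>. m < deg \<alpha> \<and> deg \<alpha> < m + k \<longrightarrow> c \<alpha> = 0"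
    and fm_nz: "hpart c m \<noteq> (\<lambda>_. 0)"
    and k: "k \<ge> 1"
    and sing_hyp: "\<forall>p. sing_pt c m p \<longrightarrow> hpart c (m + k) p \<noteq> 0"
    and w_nz: "w \<noteq> 0" and P_on_C: "hpart c m w = 0"
    and j: "j < 3" and chart: "coordc j w \<noteq> 0"
  shows "(transversal_E0 (strict c m j) (fst (aff j w), snd (aff j w), 0)
            \<longleftrightarrow> \<not> sing_pt c m w)
       \<and> (sing_pt c m w \<longrightarrow>
            (\<exists>U W \<Phi> e h D e2.
               (fst (aff j w), snd (aff j w), 0) \<in> U \<and> biholo3 U W \<Phi> \<and>
               \<Phi> (fst (aff j w), snd (aff j w), 0) = (0, 0, 0) \<and>
               (\<forall>q \<in> U. snd (snd (\<Phi> q)) = 0 \<longleftrightarrow> snd (snd q) = 0) \<and>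
               holo3 U e \<and> (\<forall>q \<in> U. e q \<noteq> 0) \<and>
               holo2 D h \<and> (\<forall>p \<in> W. (fst p, fst (snd p)) \<in> D) \<and>
               (\<forall>q \<in> U. strict c m j q =
                   e q * ((snd (snd (\<Phi> q))) ^ k + h (fst (\<Phi> q), fst (snd (\<Phi> q))))) \<and>
               holo2 {(u, v). (u, v, 0) \<in> U} e2 \<and>
               (\<forall>u v. (u, v, 0) \<in> U \<longrightarrow> e2 (u, v) \<noteq> 0 \<and>
                   hpart c m (dehom j (u, v)) =
                     e2 (u, v) * h (fst (\<Phi> (u, v, 0)), fst (snd (\<Phi> (u, v, 0))))) \<and>
               h (0, 0) = 0 \<and> (h has_derivative (\<lambda>_. 0)) (at (0, 0))))"
proof -
  define s where "s = coordc j w"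
  define u0 where "u0 = fst (aff j w)"
  define v0 where "v0 = snd (aff j w)"
  have uv: "aff j w = (u0, v0)" by (simp add: u0_def v0_def)
  define h0 where "h0 = (\<lambda>p. hpart c m (dehom j p))"
  define H0 where "H0 = ser (ad c m) (Pj j) (Qj j) Z"
  define G where "G = ser (ag c m k) (Pj j) (Qj j) (Sg m k)"
  have H0e: "H0 q = h0 (fst q, fst (snd q))" for q by (simp add: H0_def h0_def ser_ad)
  have r: "r > 0" using conv by (simp add: converges_on_ball_def)
  define R1 where "R1 = norm u0 + 1"
  define R2 where "R2 = norm v0 + 1"
  define T where "T = r / (2 * (1 + R1 + R2))"
  have R1: "R1 > 0" and R2: "R2 > 0" by (simp_all add: R1_def R2_def add_nonneg_pos)
  have T: "T > 0" using r R1 R2 by (simp add: T_def)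
  have "T * (1 + R1 + R2) = r / 2" using R1 R2 by (simp add: T_def field_simps)
  then have small: "T * (1 + R1 + R2) < r" using r by simp
  have mg: "msum (ag c m k) (Pj j) (Qj j) (Sg m k) R1 R2 T" by (rule msum_ag[OF conv T R1 R2 small])
  define Om where "Om = pd R1 R2 T"
  have oOm: "open Om" by (simp add: Om_def open_pd)
  have q0Om: "(u0, v0, 0) \<in> Om" using T by (simp add: Om_def pd_def R1_def R2_def)
  have split: "strict c m j q = H0 q + snd (snd q) ^ k * G q" if "q \<in> Om" for q
  proof -
    have "norm (fst q) \<le> R1" "norm (fst (snd q)) \<le> R2" "norm (snd (snd q)) \<le> T"
      using that by (auto simp: Om_def pd_def)
    from strict_split[OF low gap k mg this] show ?thesis by (simp add: H0e G_def h0_def)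
  qed
  have snz: "s \<noteq> 0" using chart by (simp add: s_def)
  have h0w: "h0 (u0, v0) = 0"
    using dehom_aff[OF chart] hpart_smul[of c m "1 / s" w] P_on_C uv by (simp add: h0_def s_def)
  have t0: "strict c m j (fst p, snd p, 0) = h0 p" for p
    using strict_t0[OF low, of j "fst p" "snd p"] by (simp add: h0_def)
  have h0d: "(h0 has_derivative (\<lambda>h. ser (mulc (ad c m) (Pj j)) (dec (Pj j)) (Qj j) Z (u0, v0, 0) * fst h
        + ser (mulc (ad c m) (Qj j)) (Pj j) (dec (Qj j)) Z (u0, v0, 0) * snd h)) (at (u0, v0))"
    using h0_deriv[of c m j 0 0 "(u0, v0)"] by (simp add: h0_def)
  have sing_iff: "sing_pt c m w \<longleftrightarrow> (h0 has_derivative (\<lambda>_. 0)) (at (u0, v0))"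
  proof
    assume "sing_pt c m w"
    then have "(hpart c m has_derivative (\<lambda>_. 0)) (at w)" by (simp add: sing_pt_def)
    from sing_to_chart[OF chart this] show "(h0 has_derivative (\<lambda>_. 0)) (at (u0, v0))"
      by (simp add: h0_def uv)
  next
    assume "(h0 has_derivative (\<lambda>_. 0)) (at (u0, v0))"
    then have "(hpart c m has_derivative (\<lambda>_. 0)) (at w)"
      using chart_to_sing[OF chart P_on_C] by (simp add: h0_def uv)
    then show "sing_pt c m w" using w_nz P_on_C by (simp add: sing_pt_def)
  qed
  have emb0: "((\<lambda>p::c2. (fst p + 0, snd p + 0, 0::complex)) has_derivative (\<lambda>h. (fst h, snd h, 0))) (at p)" for p
    by (rule emb_deriv)
  have part1: "transversal_E0 (strict c m j) (fst (aff j w), snd (aff j w), 0) \<longleftrightarrow> \<not> sing_pt c m w"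
  proof
    assume tr: "transversal_E0 (strict c m j) (fst (aff j w), snd (aff j w), 0)"
    show "\<not> sing_pt c m w"
    proof
      assume sg: "sing_pt c m w"
      from tr obtain a b d where D: "(strict c m j has_derivative (\<lambda>(x, y, z). a * x + b * y + d * z)) (at (u0, v0, 0))"
        and ab: "a \<noteq> 0 \<or> b \<noteq> 0"
        unfolding transversal_E0_def u0_def[symmetric] v0_def[symmetric] by blast
      have D': "(strict c m j has_derivative (\<lambda>h. a * fst h + b * fst (snd h) + d * snd (snd h)))
          (at ((\<lambda>p::c2. (fst p + 0, snd p + 0, 0::complex)) (u0, v0)))"
        using D unfolding form3 by simp
      have "((\<lambda>p. strict c m j (fst p + 0, snd p + 0, 0)) has_derivative
          (\<lambda>h. a * fst (fst h, snd h, 0::complex) + b * fst (snd (fst h, snd h, 0::complex)) + d * snd (snd (fst h, snd h, 0::complex)))) (at (u0, v0))"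
        by (rule has_derivative_compose[OF emb0 D'])
      moreover have "(\<lambda>p. strict c m j (fst p + 0, snd p + 0, 0)) = h0" using t0 by (simp add: fun_eq_iff)
      ultimately have "(h0 has_derivative (\<lambda>h. a * fst h + b * snd h)) (at (u0, v0))" by simp
      moreover have "(h0 has_derivative (\<lambda>_. 0)) (at (u0, v0))" using sg sing_iff by blast
      ultimately have eq: "(\<lambda>h::c2. a * fst h + b * snd h) = (\<lambda>_. 0)" by (rule has_derivative_unique)
      have "a = 0" using fun_cong[OF eq, of "(1, 0)"] by simp
      moreover have "b = 0" using fun_cong[OF eq, of "(0, 1)"] by simp
      ultimately show False using ab by simp
    qed
  next
    assume ns: "\<not> sing_pt c m w"
    define q0 :: c3 where "q0 = (u0, v0, 0)"
    define a where "a = ser (mulc (ad c m) (Pj j)) (dec (Pj j)) (Qj j) Z q0"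
    define b where "b = ser (mulc (ad c m) (Qj j)) (Pj j) (dec (Qj j)) Z q0"
    define d where "d = ser (mulc (ad c m) Z) (Pj j) (Qj j) (dec Z) q0 + of_nat k * 0 ^ (k - 1) * G q0"
    have dH: "(H0 has_derivative Dser (ad c m) (Pj j) (Qj j) Z q0) (at q0)" unfolding H0_def by (rule H0_deriv)
    have q0O: "q0 \<in> pd R1 R2 T" using q0Om by (simp add: q0_def Om_def)
    have dG: "(G has_derivative Dser (ag c m k) (Pj j) (Qj j) (Sg m k) q0) (at q0)"
      unfolding G_def by (rule ser_deriv[OF mg q0O])
    have d3: "((\<lambda>q::c3. snd (snd q)) has_derivative (\<lambda>h. snd (snd h))) (at q0)"
      by (rule bounded_linear_imp_has_derivative[OF bl_snd_snd])
    have "((\<lambda>q. H0 q + snd (snd q) ^ k * G q) has_derivative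
       (\<lambda>h. Dser (ad c m) (Pj j) (Qj j) Z q0 h + (snd (snd q0) ^ k * Dser (ag c m k) (Pj j) (Qj j) (Sg m k) q0 h
          + of_nat k * snd (snd h) * snd (snd q0) ^ (k - 1) * G q0))) (at q0)"
      by (rule has_derivative_add[OF dH has_derivative_mult[OF has_derivative_power[OF d3] dG]])
    moreover have "(\<lambda>h. Dser (ad c m) (Pj j) (Qj j) Z q0 h + (snd (snd q0) ^ k * Dser (ag c m k) (Pj j) (Qj j) (Sg m k) q0 h
          + of_nat k * snd (snd h) * snd (snd q0) ^ (k - 1) * G q0)) = (\<lambda>(x, y, z). a * x + b * y + d * z)"
      using k unfolding form3 by (simp add: fun_eq_iff Dser_def a_def b_def d_def q0_def algebra_simps zero_power)
    ultimately have "((\<lambda>q. H0 q + snd (snd q) ^ k * G q) has_derivative (\<lambda>(x, y, z). a * x + b * y + d * z)) (at q0)"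
      by simp
    then have Ds: "(strict c m j has_derivative (\<lambda>(x, y, z). a * x + b * y + d * z)) (at q0)"
      by (rule has_derivative_transform_within_open[OF _ oOm]) (use q0Om split in \<open>auto simp: q0_def\<close>)
    have ab: "a \<noteq> 0 \<or> b \<noteq> 0"
    proof (rule ccontr)
      assume "\<not> (a \<noteq> 0 \<or> b \<noteq> 0)"
      then have "(h0 has_derivative (\<lambda>_. 0)) (at (u0, v0))" using h0d by (simp add: a_def b_def q0_def)
      then show False using ns sing_iff by blast
    qed
    have "strict c m j q0 = 0" using t0[of "(u0, v0)"] h0w by (simp add: q0_def)
    then show "transversal_E0 (strict c m j) (fst (aff j w), snd (aff j w), 0)"
      unfolding transversal_E0_def u0_def[symmetric] v0_def[symmetric] q0_def[symmetric]
      using Ds ab by blast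
  qed
  have part2: "sing_pt c m w \<longrightarrow>
            (\<exists>U W \<Phi> e h D e2.
               (fst (aff j w), snd (aff j w), 0) \<in> U \<and> biholo3 U W \<Phi> \<and>
               \<Phi> (fst (aff j w), snd (aff j w), 0) = (0, 0, 0) \<and>
               (\<forall>q \<in> U. snd (snd (\<Phi> q)) = 0 \<longleftrightarrow> snd (snd q) = 0) \<and>
               holo3 U e \<and> (\<forall>q \<in> U. e q \<noteq> 0) \<and>
               holo2 D h \<and> (\<forall>p \<in> W. (fst p, fst (snd p)) \<in> D) \<and>
               (\<forall>q \<in> U. strict c m j q =
                   e q * ((snd (snd (\<Phi> q))) ^ k + h (fst (\<Phi> q), fst (snd (\<Phi> q))))) \<and>
               holo2 {(u, v). (u, v, 0) \<in> U} e2 \<and>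
               (\<forall>u v. (u, v, 0) \<in> U \<longrightarrow> e2 (u, v) \<noteq> 0 \<and>
                   hpart c m (dehom j (u, v)) =
                     e2 (u, v) * h (fst (\<Phi> (u, v, 0)), fst (snd (\<Phi> (u, v, 0))))) \<and>
               h (0, 0) = 0 \<and> (h has_derivative (\<lambda>_. 0)) (at (0, 0)))"
  proof
    assume sg: "sing_pt c m w"
    have h0z: "(h0 has_derivative (\<lambda>_. 0)) (at (u0, v0))" using sg sing_iff by blast
    define q0 :: c3 where "q0 = (u0, v0, 0)"
    have g0: "G q0 \<noteq> 0"
    proof -
      have "G q0 = hpart c (m + k) (dehom j (u0, v0))" by (simp add: G_def q0_def ser_ag_t0)
      also have "\<dots> = (1 / s) ^ (m + k) * hpart c (m + k) w"
        using dehom_aff[OF chart] uv hpart_smul by (simp add: s_def)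
      finally have "G q0 = (1 / s) ^ (m + k) * hpart c (m + k) w" .
      moreover have "hpart c (m + k) w \<noteq> 0" using sing_hyp sg by blast
      ultimately show ?thesis using snz by simp
    qed
    define Gu where "Gu = ser (mulc (ag c m k) (Pj j)) (dec (Pj j)) (Qj j) (Sg m k)"
    define Gv where "Gv = ser (mulc (ag c m k) (Qj j)) (Pj j) (dec (Qj j)) (Sg m k)"
    define Gt where "Gt = ser (mulc (ag c m k) (Sg m k)) (Pj j) (Qj j) (dec (Sg m k))"
    have dG: "(G has_derivative (\<lambda>h. Gu q * fst h + Gv q * fst (snd h) + Gt q * snd (snd h))) (at q)"
      if "q \<in> Om" for q
      using ser_deriv[OF mg, of q] that by (simp add: Om_def G_def Gu_def Gv_def Gt_def Dser_def)
    have cGu: "continuous_on Om Gu" unfolding Om_def Gu_def by (rule serP_cont[OF mg])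
    have cGv: "continuous_on Om Gv" unfolding Om_def Gv_def by (rule serQ_cont[OF mg])
    have cGt: "continuous_on Om Gt" unfolding Om_def Gt_def by (rule serS_cont[OF mg])
    have q0O: "q0 \<in> Om" using q0Om by (simp add: q0_def)
    show "\<exists>U W \<Phi> e h D e2.
               (fst (aff j w), snd (aff j w), 0) \<in> U \<and> biholo3 U W \<Phi> \<and>
               \<Phi> (fst (aff j w), snd (aff j w), 0) = (0, 0, 0) \<and>
               (\<forall>q \<in> U. snd (snd (\<Phi> q)) = 0 \<longleftrightarrow> snd (snd q) = 0) \<and>
               holo3 U e \<and> (\<forall>q \<in> U. e q \<noteq> 0) \<and>
               holo2 D h \<and> (\<forall>p \<in> W. (fst p, fst (snd p)) \<in> D) \<and>
               (\<forall>q \<in> U. strict c m j q =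
                   e q * ((snd (snd (\<Phi> q))) ^ k + h (fst (\<Phi> q), fst (snd (\<Phi> q))))) \<and>
               holo2 {(u, v). (u, v, 0) \<in> U} e2 \<and>
               (\<forall>u v. (u, v, 0) \<in> U \<longrightarrow> e2 (u, v) \<noteq> 0 \<and>
                   hpart c m (dehom j (u, v)) =
                     e2 (u, v) * h (fst (\<Phi> (u, v, 0)), fst (snd (\<Phi> (u, v, 0))))) \<and>
               h (0, 0) = 0 \<and> (h has_derivative (\<lambda>_. 0)) (at (0, 0))"
      (is "?E")
    proof (rule root_part[OF oOm q0O k dG cGu cGv cGt g0])
      fix U0 \<rho> \<rho>u \<rho>v \<rho>t
      assume oU0: "open U0" and U0O: "U0 \<subseteq> Om" and q0U0: "q0 \<in> U0"
        and rk: "\<And>q. q \<in> U0 \<Longrightarrow> \<rho> q ^ k = G q" and rnz: "\<And>q. \<rho> q \<noteq> 0"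
        and dr: "\<And>q. q \<in> U0 \<Longrightarrow> (\<rho> has_derivative (\<lambda>h. \<rho>u q * fst h + \<rho>v q * fst (snd h) + \<rho>t q * snd (snd h))) (at q)"
        and cr: "continuous_on U0 \<rho>" "continuous_on U0 \<rho>u" "continuous_on U0 \<rho>v" "continuous_on U0 \<rho>t"
      have q0U0': "(u0, v0, 0) \<in> U0" using q0U0 by (simp add: q0_def)
      show ?E
      proof (rule ift_part[OF oU0 q0U0' rnz dr cr])
        fix U W assume oU: "open U" and UU0: "U \<subseteq> U0" and q0U: "(u0, v0, 0) \<in> U"
          and bh: "biholo3 U W (\<lambda>q. (fst q - u0, fst (snd q) - v0, snd (snd q) * \<rho> q))"
        define \<Phi> where "\<Phi> = (\<lambda>q::c3. (fst q - u0, fst (snd q) - v0, snd (snd q) * \<rho> q))"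
        define h where "h = (\<lambda>p::c2. h0 (fst p + u0, snd p + v0))"
        have bh': "biholo3 U W \<Phi>" using bh by (simp add: \<Phi>_def)
        have Pq0: "\<Phi> (u0, v0, 0) = (0, 0, 0)" by (simp add: \<Phi>_def)
        have zi: "\<forall>q \<in> U. snd (snd (\<Phi> q)) = 0 \<longleftrightarrow> snd (snd q) = 0" using rnz by (simp add: \<Phi>_def)
        have he: "holo3 U (\<lambda>_. 1)"
        proof (rule holo3_I[OF oU])
          fix q :: c3
          have "((\<lambda>_. 1::complex) has_derivative (\<lambda>h. 0 * fst h + 0 * fst (snd h) + 0 * snd (snd h))) (at q)"
            by (simp add: has_derivative_const)
          then show "\<exists>a b d. ((\<lambda>_. 1::complex) has_derivative (\<lambda>h. a * fst h + b * fst (snd h) + d * snd (snd h))) (at q)"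
            by blast
        qed
        have hh: "holo2 UNIV h"
          unfolding holo2_def form2
        proof (intro conjI ballI open_UNIV)
          fix p :: c2
          have "(h has_derivative
             (\<lambda>h. ser (mulc (ad c m) (Pj j)) (dec (Pj j)) (Qj j) Z (fst p + u0, snd p + v0, 0) * fst h
                + ser (mulc (ad c m) (Qj j)) (Pj j) (dec (Qj j)) Z (fst p + u0, snd p + v0, 0) * snd h)) (at p)"
            unfolding h_def h0_def by (rule h0_deriv)
          then show "\<exists>a b. (h has_derivative (\<lambda>h. a * fst h + b * snd h)) (at p)" by blast
        qed
        have seq: "\<forall>q \<in> U. strict c m j q = 1 * ((snd (snd (\<Phi> q))) ^ k + h (fst (\<Phi> q), fst (snd (\<Phi> q))))"
        proof
          fix q assume q: "q \<in> U"
          then have qU0: "q \<in> U0" using UU0 by auto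
          then have "q \<in> Om" using U0O by auto
          then have "strict c m j q = H0 q + snd (snd q) ^ k * G q" by (rule split)
          also have "\<dots> = h0 (fst q, fst (snd q)) + snd (snd q) ^ k * \<rho> q ^ k" using rk[OF qU0] H0e by simp
          also have "\<dots> = 1 * ((snd (snd (\<Phi> q))) ^ k + h (fst (\<Phi> q), fst (snd (\<Phi> q))))"
            by (simp add: \<Phi>_def h_def power_mult_distrib)
          finally show "strict c m j q = 1 * ((snd (snd (\<Phi> q))) ^ k + h (fst (\<Phi> q), fst (snd (\<Phi> q))))" .
        qed
        have oE: "open {(u, v). (u, v, 0) \<in> U}"
        proof -
          have "open ((\<lambda>p::c2. (fst p, snd p, 0::complex)) -` U)"
            by (rule continuous_open_vimage[OF oU]) (intro continuous_intros)
          moreover have "(\<lambda>p::c2. (fst p, snd p, 0::complex)) -` U = {(u, v). (u, v, 0) \<in> U}" by auto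
          ultimately show ?thesis by simp
        qed
        have he2: "holo2 {(u, v). (u, v, 0) \<in> U} (\<lambda>_. 1)"
          unfolding holo2_def form2
        proof (intro conjI ballI oE)
          fix p :: c2
          have "((\<lambda>_. 1::complex) has_derivative (\<lambda>h. 0 * fst h + 0 * snd h)) (at p)"
            by (simp add: has_derivative_const)
          then show "\<exists>a b. ((\<lambda>_. 1::complex) has_derivative (\<lambda>h. a * fst h + b * snd h)) (at p)" by blast
        qed
        have heq: "\<forall>u v. (u, v, 0) \<in> U \<longrightarrow> (1::complex) \<noteq> 0 \<and>
                   hpart c m (dehom j (u, v)) = 1 * h (fst (\<Phi> (u, v, 0)), fst (snd (\<Phi> (u, v, 0))))"
          by (simp add: \<Phi>_def h_def h0_def)
        have h00: "h (0, 0) = 0" using h0w by (simp add: h_def)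
        have t1: "((\<lambda>p::c2. fst p + u0) has_derivative (\<lambda>h. fst h)) (at (0, 0))"
          by (rule has_derivative_eq_rhs, (rule derivative_eq_intros)+) auto
        have t2: "((\<lambda>p::c2. snd p + v0) has_derivative (\<lambda>h. snd h)) (at (0, 0))"
          by (rule has_derivative_eq_rhs, (rule derivative_eq_intros)+) auto
        have tr: "((\<lambda>p::c2. (fst p + u0, snd p + v0)) has_derivative (\<lambda>h. (fst h, snd h))) (at (0, 0))"
          by (rule has_derivative_Pair[OF t1 t2])
        have h0z': "(h0 has_derivative (\<lambda>_. 0)) (at ((\<lambda>p::c2. (fst p + u0, snd p + v0)) (0, 0)))"
          using h0z by simp
        have hd: "(h has_derivative (\<lambda>_. 0)) (at (0, 0))"
          using has_derivative_compose[OF tr h0z'] by (simp add: h_def)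
        show ?E
          apply (rule exI[of _ U], rule exI[of _ W], rule exI[of _ \<Phi>], rule exI[of _ "\<lambda>_. 1"],
              rule exI[of _ h], rule exI[of _ UNIV], rule exI[of _ "\<lambda>_. 1"])
          unfolding u0_def[symmetric] v0_def[symmetric]
          using q0U bh' Pq0 zi he hh seq he2 heq h00 hd by simp
      qed
    qed
  qed
  show ?thesis using part1 part2 by blast
qed


end
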